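(* Let $p>1$ and let $G$ be a finite simple connected graph on $n\geq 4$ vertices with nonempty boundary $B(G)$. Then $$\lambda_{1,p}(G)\geq \lambda_{1,p}(T_{n,3}),$$ and equality holds if and only if $G$ is isomorphic to $T_{n,3}$.
   Context: For a finite simple connected graph $G$, its boundary is $B(G)=\{x\in V(G): \deg(x)=1\}$ (the pendant vertices) and its interior is $\Omega(G)=V(G)\setminus B(G)$; "graph with boundary" means $B(G)\neq\emptyset$. For $p\ge 1$, let $C_B(G)=\{f\in\mathbb{R}^{V(G)}: f|_{B(G)}\equiv 0\}$ and define the first $p$-Dirichlet eigenvalue $$\lambda_{1,p}(G)=\min_{f\in C_B(G)\setminus\{0\}}\frac{\sum_{\{x,y\}\in E(G)}|f(x)-f(y)|^p}{\sum_{x\in V(G)}|f(x)|^p}.$$ (For $p>1$ this equals the smallest $\lambda$ such that $\sum_{y\sim x}|f(x)-f(y)|^{p-2}(f(x)-f(y))=\lambda|f(x)|^{p-2}f(x)$ for all $x\in\Omega(G)$ has a nonzero solution $f\in C_B(G)$.) For $n>i\ge 3$, the tadpole graph $T_{n,i}$ is the graph on vertices $t_1,\dots,t_n$ with edges $t_n\sim t_{n-1}\sim\cdots\sim t_i\sim t_{i-1}\sim\cdots\sim t_2\sim t_1\sim t_i$, i.e. a cycle $t_i,t_{i-1},\dots,t_1$ of length $i$ (the head) with a path $t_n,\dots,t_i$ (the tail) attached at the neck vertex $t_i$; its only boundary vertex is $t_n$. *)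

theory Defs
  imports Complex_Main
begin

definition simple_graph :: "'a set \<Rightarrow> ('a \<Rightarrow> 'a \<Rightarrow> bool) \<Rightarrow> bool" where
  "simple_graph V E \<longleftrightarrow> finite V \<and>
     (\<forall>x y. E x y \<longrightarrow> x \<in> V \<and> y \<in> V) \<and>
     (\<forall>x y. E x y \<longrightarrow> E y x) \<and> (\<forall>x. \<not> E x x)"

definition connected_graph :: "'a set \<Rightarrow> ('a \<Rightarrow> 'a \<Rightarrow> bool) \<Rightarrow> bool" where
  "connected_graph V E \<longleftrightarrow> (\<forall>x\<in>V. \<forall>y\<in>V. E\<^sup>*\<^sup>* x y)"

definition degree :: "'a set \<Rightarrow> ('a \<Rightarrow> 'a \<Rightarrow> bool) \<Rightarrow> 'a \<Rightarrow> nat" where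
  "degree V E x = card {y \<in> V. E x y}"

definition boundary :: "'a set \<Rightarrow> ('a \<Rightarrow> 'a \<Rightarrow> bool) \<Rightarrow> 'a set" where
  "boundary V E = {x \<in> V. degree V E x = 1}"

definition p_energy :: "'a set \<Rightarrow> ('a \<Rightarrow> 'a \<Rightarrow> bool) \<Rightarrow> real \<Rightarrow> ('a \<Rightarrow> real) \<Rightarrow> real" where
  "p_energy V E p f = (\<Sum>x\<in>V. \<Sum>y\<in>V. if E x y then \<bar>f x - f y\<bar> powr p else 0) / 2"

definition p_norm_pow :: "'a set \<Rightarrow> real \<Rightarrow> ('a \<Rightarrow> real) \<Rightarrow> real" where
  "p_norm_pow V p f = (\<Sum>x\<in>V. \<bar>f x\<bar> powr p)"

text \<open>First p-Dirichlet eigenvalue: the minimum (= infimum, it is attained) of the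
  Rayleigh quotient over nonzero functions on V vanishing on the boundary.\<close>
definition lambda1p :: "'a set \<Rightarrow> ('a \<Rightarrow> 'a \<Rightarrow> bool) \<Rightarrow> real \<Rightarrow> real" where
  "lambda1p V E p = Inf {p_energy V E p f / p_norm_pow V p f | f.
      (\<forall>x\<in>boundary V E. f x = 0) \<and> (\<exists>x\<in>V. f x \<noteq> 0)}"

definition tadpole_adj :: "nat \<Rightarrow> nat \<Rightarrow> nat \<Rightarrow> nat \<Rightarrow> bool" where
  "tadpole_adj n i x y \<longleftrightarrow> x \<in> {1..n} \<and> y \<in> {1..n} \<and>
     (y = x + 1 \<or> x = y + 1 \<or> (x = 1 \<and> y = i) \<or> (x = i \<and> y = 1))"

definition tadpole_vertices :: "nat \<Rightarrow> nat set" where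
  "tadpole_vertices n = {1..n}"

definition graph_iso :: "'a set \<Rightarrow> ('a \<Rightarrow> 'a \<Rightarrow> bool) \<Rightarrow> 'b set \<Rightarrow> ('b \<Rightarrow> 'b \<Rightarrow> bool) \<Rightarrow> bool" where
  "graph_iso V E W F \<longleftrightarrow> (\<exists>h. bij_betw h V W \<and> (\<forall>x\<in>V. \<forall>y\<in>V. E x y \<longleftrightarrow> F (h x) (h y)))"

end

theory Submission
  imports Defs
begin
lemma powr_split1:
  fixes x p :: real
  assumes "x \<ge> 0" "p \<ge> 1"
  shows "x powr p = x * x powr (p - 1)"
proof (cases "x = 0")
  case True then show ?thesis using assms by simp
next
  case False
  then have "x > 0" using assms by auto
  have "x powr (1 + (p - 1)) = x powr 1 * x powr (p - 1)" by (rule powr_add)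
  then show ?thesis using \<open>x > 0\<close> by simp
qed

lemma superadd2:
  fixes x y p :: real
  assumes "x \<ge> 0" "y \<ge> 0" "p \<ge> 1"
  shows "x powr p + y powr p \<le> (x + y) powr p"
proof -
  have "x powr p + y powr p = x * x powr (p - 1) + y * y powr (p - 1)"
    using assms powr_split1 by simp
  also have "\<dots> \<le> x * (x + y) powr (p - 1) + y * (x + y) powr (p - 1)"
    using assms by (intro add_mono mult_left_mono powr_mono2) auto
  also have "\<dots> = (x + y) * (x + y) powr (p - 1)" by (simp add: algebra_simps)
  also have "\<dots> = (x + y) powr p" using powr_split1[of "x+y" p] assms by simp
  finally show ?thesis .
qed

lemma superadd2_strict:
  fixes x y p :: real
  assumes "x > 0" "y > 0" "p > 1"
  shows "x powr p + y powr p < (x + y) powr p"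
proof -
  have "x powr p + y powr p = x * x powr (p - 1) + y * y powr (p - 1)"
    using assms powr_split1 by simp
  also have "\<dots> < x * (x + y) powr (p - 1) + y * (x + y) powr (p - 1)"
    using assms by (intro add_strict_mono mult_strict_left_mono powr_less_mono2) auto
  also have "\<dots> = (x + y) * (x + y) powr (p - 1)" by (simp add: algebra_simps)
  also have "\<dots> = (x + y) powr p" using powr_split1[of "x+y" p] assms by simp
  finally show ?thesis .
qed

lemma superadd_sum:
  fixes x :: "'b \<Rightarrow> real" and p :: real
  assumes "finite K" "\<And>k. k \<in> K \<Longrightarrow> x k \<ge> 0" "p \<ge> 1"
  shows "(\<Sum>k\<in>K. x k powr p) \<le> (\<Sum>k\<in>K. x k) powr p"
  using assms
proof (induction K rule: finite_induct)
  case empty then show ?case by simp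
next
  case (insert a F)
  have "(\<Sum>k\<in>insert a F. x k powr p) = x a powr p + (\<Sum>k\<in>F. x k powr p)"
    using insert by simp
  also have "\<dots> \<le> x a powr p + (\<Sum>k\<in>F. x k) powr p" using insert by simp
  also have "\<dots> \<le> (x a + (\<Sum>k\<in>F. x k)) powr p"
    using insert by (intro superadd2) (auto intro: sum_nonneg)
  also have "\<dots> = (\<Sum>k\<in>insert a F. x k) powr p" using insert by simp
  finally show ?case .
qed

lemma telescope:
  fixes a :: "nat \<Rightarrow> real"
  shows "i \<le> j \<Longrightarrow> a i - a j = (\<Sum>k=i..<j. a k - a (Suc k))"
  by (induction j rule: dec_induct) (auto simp: sum.atLeastLessThan_Suc)

lemma sum_swap_count:
  fixes g :: "nat \<Rightarrow> real" and I :: "'e \<Rightarrow> nat set"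
  assumes "finite P" "finite K" "\<And>e. e \<in> P \<Longrightarrow> I e \<subseteq> K"
  shows "(\<Sum>e\<in>P. \<Sum>k\<in>I e. g k) = (\<Sum>k\<in>K. real (card {e\<in>P. k \<in> I e}) * g k)"
proof -
  have "(\<Sum>e\<in>P. \<Sum>k\<in>I e. g k) = (\<Sum>e\<in>P. \<Sum>k\<in>K. if k \<in> I e then g k else 0)"
  proof (rule sum.cong[OF refl])
    fix e assume "e \<in> P"
    then have "K \<inter> I e = I e" using assms by auto
    then show "(\<Sum>k\<in>I e. g k) = (\<Sum>k\<in>K. if k \<in> I e then g k else 0)"
      using sum.inter_restrict[OF assms(2), of g "I e"] by simp
  qed
  also have "\<dots> = (\<Sum>k\<in>K. \<Sum>e\<in>P. if k \<in> I e then g k else 0)" by (rule sum.swap)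
  also have "\<dots> = (\<Sum>k\<in>K. real (card {e\<in>P. k \<in> I e}) * g k)"
  proof (rule sum.cong[OF refl])
    fix k
    show "(\<Sum>e\<in>P. if k \<in> I e then g k else 0) = real (card {e\<in>P. k \<in> I e}) * g k"
      using sum.inter_filter[OF assms(1), of "\<lambda>_. g k" "\<lambda>e. k \<in> I e"] by simp
  qed
  finally show ?thesis .
qed

lemma card_ge2I: "finite S \<Longrightarrow> x \<in> S \<Longrightarrow> y \<in> S \<Longrightarrow> x \<noteq> y \<Longrightarrow> 2 \<le> card S"
  by (metis card_2_iff card_mono empty_subsetI insert_subset)

definition Pairs :: "nat \<Rightarrow> (nat \<Rightarrow> nat \<Rightarrow> bool) \<Rightarrow> (nat \<times> nat) set" where
  "Pairs n A = {e. 1 \<le> fst e \<and> fst e < snd e \<and> snd e \<le> n \<and> A (fst e) (snd e)}"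

definition EGn :: "nat \<Rightarrow> (nat \<Rightarrow> nat \<Rightarrow> bool) \<Rightarrow> real \<Rightarrow> (nat \<Rightarrow> real) \<Rightarrow> real" where
  "EGn n A p a = (\<Sum>e\<in>Pairs n A. (a (fst e) - a (snd e)) powr p)"

definition ETn :: "nat \<Rightarrow> real \<Rightarrow> (nat \<Rightarrow> real) \<Rightarrow> real" where
  "ETn n p a = (a 1 - a 2) powr p + (a 2 - a 3) powr p + (a 1 - a 3) powr p
      + (\<Sum>k=3..<n. (a k - a (Suc k)) powr p)"

lemma Pairs_finite: "finite (Pairs n A)"
proof -
  have "Pairs n A \<subseteq> {1..n} \<times> {1..n}" unfolding Pairs_def by auto
  then show ?thesis using finite_subset by blast
qed

lemma core:
  fixes A :: "nat \<Rightarrow> nat \<Rightarrow> bool" and a :: "nat \<Rightarrow> real" and p :: real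
  assumes p: "p > 1" and n: "n \<ge> 4"
   and mono: "\<And>i j. 1 \<le> i \<Longrightarrow> i \<le> j \<Longrightarrow> j \<le> n \<Longrightarrow> a j \<le> a i"
   and an: "a n = 0"
   and cut: "\<And>k. 1 \<le> k \<Longrightarrow> k < n \<Longrightarrow> \<exists>i j. 1 \<le> i \<and> i \<le> k \<and> k < j \<and> j \<le> n \<and> A i j"
   and deg1: "\<exists>j1 j2. 2 \<le> j1 \<and> j1 \<le> n \<and> 2 \<le> j2 \<and> j2 \<le> n \<and> j1 \<noteq> j2 \<and> A 1 j1 \<and> A 1 j2"
   and deg2: "a 2 = 0 \<or> (\<exists>m. 3 \<le> m \<and> m \<le> n \<and> A 2 m)"
  shows "ETn n p a \<le> EGn n A p a"
    and "(\<And>k. 2 \<le> k \<Longrightarrow> k < n \<Longrightarrow> a (Suc k) < a k) \<Longrightarrow> EGn n A p a = ETn n p a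
         \<Longrightarrow> (\<forall>i j. 1 \<le> i \<and> i < j \<and> j \<le> n \<and> A i j \<longrightarrow> j = Suc i \<or> (i = 1 \<and> j = 3))
             \<and> A 1 3"
proof -
  define d where "d k = a k - a (Suc k)" for k
  define P where "P = Pairs n A"
  define W where "W e = (a (fst e) - a (snd e)) powr p" for e
  define I where "I e = {fst e..<snd e}" for e :: "nat \<times> nat"
  define S where "S e = (\<Sum>k\<in>I e. d k powr p)" for e
  have p1: "p \<ge> 1" using p by simp
  have finP: "finite P" unfolding P_def by (rule Pairs_finite)
  have dnn: "d k \<ge> 0" if "1 \<le> k" "k < n" for k
    unfolding d_def using mono[of k "Suc k"] that by auto
  have tel: "a i - a j = (\<Sum>k\<in>{i..<j}. d k)" if "i \<le> j" for i j
    unfolding d_def using telescope that by blast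
  have PI: "I e \<subseteq> {1..<n}" if "e \<in> P" for e
    using that unfolding P_def Pairs_def I_def by auto
  have WS: "S e \<le> W e" if "e \<in> P" for e
  proof -
    have "S e \<le> (\<Sum>k\<in>I e. d k) powr p"
      unfolding S_def using PI[OF that] dnn p1 by (intro superadd_sum) (auto simp: I_def)
    also have "\<dots> = W e" unfolding W_def I_def using tel[of "fst e" "snd e"] that
      unfolding P_def Pairs_def by auto
    finally show ?thesis .
  qed
  obtain js where js: "3 \<le> js" "js \<le> n" "A 1 js"
    using deg1 by (metis Suc_1 eval_nat_numeral(3) le_antisym not_less_eq_eq)
  define es where "es = (1::nat, js)"
  have esP: "es \<in> P" unfolding es_def P_def Pairs_def using js by auto
  define Y where "Y = (\<Sum>k\<in>{3..<js}. d k)"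
  define Yp where "Yp = (\<Sum>k\<in>{3..<js}. d k powr p)"
  have I13: "{1..<js} = {1,2} \<union> {3..<js}" using js by auto
  have Wes: "W es = (d 1 + d 2 + Y) powr p"
  proof -
    have "W es = (\<Sum>k\<in>{1..<js}. d k) powr p" unfolding W_def es_def using tel[of 1 js] js by simp
    also have "(\<Sum>k\<in>{1..<js}. d k) = d 1 + d 2 + Y" unfolding I13 Y_def
      by (subst sum.union_disjoint) auto
    finally show ?thesis .
  qed
  have Ses: "S es = d 1 powr p + d 2 powr p + Yp"
  proof -
    have "S es = (\<Sum>k\<in>{1..<js}. d k powr p)" unfolding S_def I_def es_def by simp
    also have "\<dots> = d 1 powr p + d 2 powr p + Yp" unfolding I13 Yp_def
      by (subst sum.union_disjoint) auto
    finally show ?thesis .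
  qed
  have d1: "d 1 \<ge> 0" and d2: "d 2 \<ge> 0" using dnn n by auto
  have Ynn: "Y \<ge> 0" unfolding Y_def using dnn js by (intro sum_nonneg) auto
  have YpY: "Yp \<le> Y powr p" unfolding Yp_def Y_def using dnn js p1
    by (intro superadd_sum) auto
  have slack1: "(d 1 + d 2) powr p + Yp \<le> W es"
  proof -
    have "(d 1 + d 2) powr p + Yp \<le> (d 1 + d 2) powr p + Y powr p" using YpY by simp
    also have "\<dots> \<le> W es" unfolding Wes using superadd2[of "d 1 + d 2" Y p] d1 d2 Ynn p1 by simp
    finally show ?thesis .
  qed
  define c where "c k = card {e\<in>P. k \<in> I e}" for k
  have sumS: "(\<Sum>e\<in>P. S e) = (\<Sum>k\<in>{1..<n}. real (c k) * d k powr p)"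
    unfolding S_def c_def by (rule sum_swap_count[OF finP _ PI]) auto
  have c_ge1: "c k \<ge> 1" if k1: "1 \<le> k" "k < n" for k
  proof -
    obtain i j where ij: "1 \<le> i" "i \<le> k" "k < j" "j \<le> n" "A i j" using cut[OF k1] by blast
    have "(i,j) \<in> {e\<in>P. k \<in> I e}" unfolding P_def Pairs_def I_def using ij by auto
    moreover have "finite {e\<in>P. k \<in> I e}" using finP by simp
    ultimately show ?thesis unfolding c_def
      by (metis One_nat_def Suc_leI card_gt_0_iff empty_iff)
  qed
  have c1: "c 1 \<ge> 2"
  proof -
    obtain j1 j2 where j: "2 \<le> j1" "j1 \<le> n" "2 \<le> j2" "j2 \<le> n" "j1 \<noteq> j2" "A 1 j1" "A 1 j2"
      using deg1 by blast
    have "(1,j1) \<in> {e\<in>P. 1 \<in> I e}" "(1,j2) \<in> {e\<in>P. 1 \<in> I e}"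
      unfolding P_def Pairs_def I_def using j by auto
    then show ?thesis unfolding c_def using finP j(5) by (intro card_ge2I[of _ "(1,j1)" "(1,j2)"]) auto
  qed
  have c2: "c 2 \<ge> 2 \<or> d 2 = 0"
  proof (cases "a 2 = 0")
    case True
    have "a 3 \<le> a 2" "0 \<le> a 3" using mono[of 2 3] mono[of 3 n] an n by auto
    then show ?thesis using True unfolding d_def by (simp add: numeral_eq_Suc)
  next
    case False
    then obtain m where m: "3 \<le> m" "m \<le> n" "A 2 m" using deg2 by blast
    have "(1,js) \<in> {e\<in>P. 2 \<in> I e}" "(2,m) \<in> {e\<in>P. 2 \<in> I e}"
      unfolding P_def Pairs_def I_def using js m by auto
    then show ?thesis unfolding c_def using finP by (intro disjI1 card_ge2I[of _ "(1,js)" "(2,m)"]) auto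
  qed
  define T3 where "T3 = (\<Sum>k=3..<n. d k powr p)"
  have split1n: "{1..<n} = {1,2} \<union> {3..<n}" using n by auto
  have slack3: "2 * d 1 powr p + 2 * d 2 powr p + T3 \<le> (\<Sum>e\<in>P. S e)"
  proof -
    have "(\<Sum>e\<in>P. S e) = real (c 1) * d 1 powr p + real (c 2) * d 2 powr p
        + (\<Sum>k\<in>{3..<n}. real (c k) * d k powr p)"
      unfolding sumS split1n by (subst sum.union_disjoint) auto
    moreover have "T3 \<le> (\<Sum>k\<in>{3..<n}. real (c k) * d k powr p)"
      unfolding T3_def
    proof (rule sum_mono)
      fix k assume "k \<in> {3..<n}"
      then have "real (c k) \<ge> 1" using c_ge1[of k] by auto
      then show "d k powr p \<le> real (c k) * d k powr p"
        by (metis mult_le_cancel_right1 powr_ge_zero not_le order_less_le_trans)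
    qed
    moreover have "2 * d 1 powr p \<le> real (c 1) * d 1 powr p"
      using c1 by (intro mult_right_mono) auto
    moreover have "2 * d 2 powr p \<le> real (c 2) * d 2 powr p"
      using c2 by (auto intro: mult_right_mono)
    ultimately show ?thesis by linarith
  qed
  have Pdecomp: "(\<Sum>e\<in>P. W e) = W es + (\<Sum>e\<in>P-{es}. W e)"
    using finP esP by (simp add: sum.remove)
  have Sdecomp: "(\<Sum>e\<in>P. S e) = S es + (\<Sum>e\<in>P-{es}. S e)"
    using finP esP by (simp add: sum.remove)
  have slack2: "(\<Sum>e\<in>P-{es}. S e) \<le> (\<Sum>e\<in>P-{es}. W e)"
    using WS by (intro sum_mono) auto
  have EG: "EGn n A p a = (\<Sum>e\<in>P. W e)" unfolding EGn_def P_def W_def by simp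
  have ET: "ETn n p a = d 1 powr p + d 2 powr p + (d 1 + d 2) powr p + T3"
    unfolding ETn_def T3_def d_def by (simp add: numeral_eq_Suc)
  show "ETn n p a \<le> EGn n A p a"
    using EG ET Pdecomp Sdecomp slack1 slack2 slack3 Ses by linarith
  assume strict: "\<And>k. 2 \<le> k \<Longrightarrow> k < n \<Longrightarrow> a (Suc k) < a k"
  assume eq: "EGn n A p a = ETn n p a"
  have dpos: "d k > 0" if "2 \<le> k" "k < n" for k unfolding d_def using strict[OF that] by simp
  have e1: "W es = (d 1 + d 2) powr p + Yp"
    using EG ET Pdecomp Sdecomp slack1 slack2 slack3 Ses eq by linarith
  have e2: "(\<Sum>e\<in>P-{es}. W e - S e) = 0"
    using EG ET Pdecomp Sdecomp slack1 slack2 slack3 Ses eq by (simp add: sum_subtractf)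
  have e2': "W e = S e" if "e \<in> P - {es}" for e
  proof -
    have "\<forall>e\<in>P-{es}. W e - S e = 0"
      using e2 sum_nonneg_eq_0_iff[of "P-{es}" "\<lambda>e. W e - S e"] finP WS by auto
    then show ?thesis using that by auto
  qed
  have js3: "js = 3"
  proof (rule ccontr)
    assume "js \<noteq> 3"
    then have "js \<ge> 4" using js by auto
    have "Y \<ge> d 3" unfolding Y_def using \<open>js \<ge> 4\<close> dnn js
      by (intro member_le_sum) auto
    then have Ypos: "Y > 0" using dpos[of 3] \<open>js \<ge> 4\<close> js by auto
    have "(d 1 + d 2) powr p + Yp \<le> (d 1 + d 2) powr p + Y powr p" using YpY by simp
    also have "\<dots> < W es" unfolding Wes using superadd2_strict[of "d 1 + d 2" Y p] d1 dpos[of 2] Ypos p n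
      by simp
    finally show False using e1 by simp
  qed
  have consec: "j = Suc i \<or> (i = 1 \<and> j = 3)" if "(i,j) \<in> P" for i j
  proof (rule ccontr)
    assume nc: "\<not> (j = Suc i \<or> (i = 1 \<and> j = 3))"
    have ij: "1 \<le> i" "i < j" "j \<le> n" using that unfolding P_def Pairs_def by auto
    then have j2: "j \<ge> i + 2" using nc by auto
    have ne: "(i,j) \<noteq> es" unfolding es_def using js3 nc by auto
    define X where "X = (\<Sum>k\<in>{i..<j-1}. d k)"
    define Xp where "Xp = (\<Sum>k\<in>{i..<j-1}. d k powr p)"
    have Iij: "{i..<j} = insert (j-1) {i..<j-1}" using j2 by auto
    have Wij: "W (i,j) = (X + d (j-1)) powr p"
      unfolding W_def X_def using tel[of i j] ij Iij by (simp add: add.commute)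
    have Sij: "S (i,j) = Xp + d (j-1) powr p"
      unfolding S_def Xp_def I_def using Iij by simp
    have Xpos: "X > 0"
    proof -
      have "j \<ge> 4" using nc j2 ij by auto
      have "X \<ge> d (j-2)" unfolding X_def using dnn ij j2 by (intro member_le_sum) auto
      moreover have "d (j-2) > 0" using dpos[of "j-2"] \<open>j \<ge> 4\<close> ij by auto
      ultimately show ?thesis by simp
    qed
    have Ypos: "d (j-1) > 0" using dpos[of "j-1"] ij j2 by auto
    have "XpX": "Xp \<le> X powr p" unfolding Xp_def X_def using dnn ij p1 by (intro superadd_sum) auto
    have "S (i,j) < W (i,j)" unfolding Wij Sij
      using superadd2_strict[OF Xpos Ypos p] XpX by simp
    then show False using e2'[of "(i,j)"] that ne by simp
  qed
  show "(\<forall>i j. 1 \<le> i \<and> i < j \<and> j \<le> n \<and> A i j \<longrightarrow> j = Suc i \<or> (i = 1 \<and> j = 3)) \<and> A 1 3"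
    using consec js js3 unfolding P_def Pairs_def by auto
qed

definition phi :: "real \<Rightarrow> real \<Rightarrow> real" where
  "phi p t = sgn t * \<bar>t\<bar> powr (p - 1)"

lemma deriv_abs_powr:
  fixes p c :: real
  assumes p: "p > 1"
  shows "DERIV (\<lambda>u. \<bar>u\<bar> powr p) c :> p * phi p c"
proof -
  consider "c > 0" | "c < 0" | "c = 0" by linarith
  then show ?thesis
  proof cases
    case 1
    have ev: "eventually (\<lambda>u. u \<in> {0<..}) (nhds c)"
      using 1 by (intro eventually_nhds_in_open) auto
    have "DERIV (\<lambda>u. u powr p) c :> p * c powr (p - 1)"
      using has_real_derivative_powr[OF 1] .
    moreover have "eventually (\<lambda>u. \<bar>u\<bar> powr p = u powr p) (nhds c)"
      using ev by eventually_elim auto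
    ultimately show ?thesis using 1
      by (subst DERIV_cong_ev[of c c _ "\<lambda>u. u powr p" _ "p * c powr (p - 1)"]) (auto simp: phi_def)
  next
    case 2
    have ev: "eventually (\<lambda>u. u \<in> {..<0}) (nhds c)"
      using 2 by (intro eventually_nhds_in_open) auto
    have d: "DERIV (\<lambda>u. - u) c :> -1" by (auto intro!: derivative_eq_intros)
    have "DERIV (\<lambda>u. (- u) powr p) c :> p * (- c) powr (p - of_nat 1) * (-1)"
      using DERIV_fun_powr[OF d] 2 by simp
    moreover have "eventually (\<lambda>u. \<bar>u\<bar> powr p = (- u) powr p) (nhds c)"
      using ev by eventually_elim auto
    ultimately show ?thesis using 2
      by (subst DERIV_cong_ev[of c c _ "\<lambda>u. (- u) powr p" _ "p * (- c) powr (p - of_nat 1) * (-1)"])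
         (auto simp: phi_def)
  next
    case 3
    have lim: "((\<lambda>h. \<bar>h\<bar> powr (p - 1)) \<longlongrightarrow> 0) (at 0)"
    proof (rule tendsto_zero_powrI)
      show "((\<lambda>h::real. \<bar>h\<bar>) \<longlongrightarrow> 0) (at 0)"
        using tendsto_rabs_zero[OF tendsto_ident_at[of 0 UNIV]] by simp
    qed (use p in auto)
    have "((\<lambda>h. (\<bar>0 + h\<bar> powr p - \<bar>0\<bar> powr p) / h) \<longlongrightarrow> 0) (at 0)"
    proof (rule tendsto_0_le[OF lim, of _ 1])
      show "\<forall>\<^sub>F x in at 0. norm ((\<bar>0 + x\<bar> powr p - \<bar>0\<bar> powr p) / x) \<le> norm (\<bar>x\<bar> powr (p - 1)) * 1"
      proof (rule always_eventually, rule allI)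
        fix x :: real
        show "norm ((\<bar>0 + x\<bar> powr p - \<bar>0\<bar> powr p) / x) \<le> norm (\<bar>x\<bar> powr (p - 1)) * 1"
        proof (cases "x = 0")
          case False
          have "\<bar>x\<bar> powr p = \<bar>x\<bar> * \<bar>x\<bar> powr (p - 1)" using powr_split1[of "\<bar>x\<bar>" p] p by simp
          then show ?thesis using False by (simp add: abs_divide abs_mult)
        qed simp
      qed
    qed
    then show ?thesis using 3 unfolding DERIV_def by (simp add: phi_def)
  qed
qed

definition adm :: "'a set \<Rightarrow> ('a \<Rightarrow> 'a \<Rightarrow> bool) \<Rightarrow> ('a \<Rightarrow> real) \<Rightarrow> bool" where
  "adm V E f \<longleftrightarrow> (\<forall>x\<in>boundary V E. f x = 0) \<and> (\<exists>x\<in>V. f x \<noteq> 0)"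

definition Rq :: "'a set \<Rightarrow> ('a \<Rightarrow> 'a \<Rightarrow> bool) \<Rightarrow> real \<Rightarrow> ('a \<Rightarrow> real) \<Rightarrow> real" where
  "Rq V E p f = p_energy V E p f / p_norm_pow V p f"
lemma lambda1p_alt: "lambda1p V E p = Inf {Rq V E p f | f. adm V E f}"
  unfolding lambda1p_def Rq_def adm_def by simp

lemma energy_nonneg: "p_energy V E p f \<ge> 0"
  unfolding p_energy_def by (intro divide_nonneg_pos sum_nonneg) auto

lemma norm_nonneg: "p_norm_pow V p f \<ge> 0"
  unfolding p_norm_pow_def by (intro sum_nonneg) auto

lemma norm_pos: "finite V \<Longrightarrow> x \<in> V \<Longrightarrow> f x \<noteq> 0 \<Longrightarrow> p_norm_pow V p f > 0"
  unfolding p_norm_pow_def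
  by (rule sum_pos2[of V x]) auto

lemma adm_norm_pos: "finite V \<Longrightarrow> adm V E f \<Longrightarrow> p_norm_pow V p f > 0"
  unfolding adm_def by (metis norm_pos)

lemma Rq_nonneg: "Rq V E p f \<ge> 0"
  unfolding Rq_def by (rule divide_nonneg_nonneg[OF energy_nonneg norm_nonneg])

lemma lambda_le:
  assumes "adm V E f" shows "lambda1p V E p \<le> Rq V E p f"
proof -
  have "Rq V E p f \<in> {Rq V E p f | f. adm V E f}" using assms by blast
  moreover have "bdd_below {Rq V E p f | f. adm V E f}"
  proof (rule bdd_belowI[of _ 0])
    fix y assume "y \<in> {Rq V E p f | f. adm V E f}"
    then obtain g where "y = Rq V E p g" by blast
    then show "0 \<le> y" using Rq_nonneg by simp
  qed
  ultimately show ?thesis unfolding lambda1p_alt by (rule cInf_lower)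
qed

lemma lambda_ge:
  assumes "adm V E f0" "\<And>f. adm V E f \<Longrightarrow> c \<le> Rq V E p f"
  shows "c \<le> lambda1p V E p"
  unfolding lambda1p_alt
proof (rule cInf_greatest)
  show "{Rq V E p f | f. adm V E f} \<noteq> {}" using assms(1) by blast
  fix y assume "y \<in> {Rq V E p f | f. adm V E f}"
  then obtain g where "y = Rq V E p g" "adm V E g" by blast
  then show "c \<le> y" using assms(2) by simp
qed

lemma zero_on_V:
  assumes "\<forall>y\<in>V. g y = 0"
  shows "p_energy V E p g = 0" "p_norm_pow V p g = 0"
proof -
  have "(\<Sum>x\<in>V. \<Sum>y\<in>V. if E x y then \<bar>g x - g y\<bar> powr p else 0) = (\<Sum>x\<in>V. \<Sum>y\<in>V. 0)"
    using assms by (intro sum.cong refl) simp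
  then show "p_energy V E p g = 0" unfolding p_energy_def by simp
  have "(\<Sum>x\<in>V. \<bar>g x\<bar> powr p) = (\<Sum>x\<in>V. 0)"
    using assms by (intro sum.cong refl) simp
  then show "p_norm_pow V p g = 0" unfolding p_norm_pow_def by simp
qed

lemma phi_minus: "phi p (- t) = - phi p t"
  unfolding phi_def by (simp add: sgn_minus)

lemma EL:
  fixes V :: "'a set" and E :: "'a \<Rightarrow> 'a \<Rightarrow> bool" and h :: "'a \<Rightarrow> real"
  assumes p: "p > 1" and G: "simple_graph V E" and xV: "x \<in> V" and xB: "x \<notin> boundary V E"
    and hadm: "adm V E h" and hmin: "\<And>g. adm V E g \<Longrightarrow> Rq V E p h \<le> Rq V E p g"
  shows "(\<Sum>y\<in>{y\<in>V. E x y}. phi p (h x - h y)) = Rq V E p h * phi p (h x)"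
proof -
  have finV: "finite V" and sym: "\<And>u v. E u v \<Longrightarrow> E v u" and irr: "\<And>u. \<not> E u u"
    using G unfolding simple_graph_def by auto
  define lam where "lam = Rq V E p h"
  define ht where "ht t = h(x := h x + t)" for t
  define F where "F t = p_energy V E p (ht t) - lam * p_norm_pow V p (ht t)" for t
  have N0: "p_norm_pow V p h > 0" using adm_norm_pos[OF finV hadm] .
  have ht0: "ht 0 = h" unfolding ht_def by auto
  have F0: "F 0 = 0" unfolding F_def ht0 lam_def Rq_def using N0 by simp
  have Fge: "F 0 \<le> F t" for t
  proof (cases "\<exists>y\<in>V. ht t y \<noteq> 0")
    case True
    have "adm V E (ht t)" unfolding adm_def
    proof
      show "\<forall>y\<in>boundary V E. ht t y = 0"
        using hadm xB unfolding adm_def ht_def by auto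
    qed (use True in auto)
    then have "lam \<le> Rq V E p (ht t)" unfolding lam_def by (rule hmin)
    moreover have "p_norm_pow V p (ht t) > 0" using adm_norm_pos[OF finV \<open>adm V E (ht t)\<close>] .
    ultimately have "lam * p_norm_pow V p (ht t) \<le> p_energy V E p (ht t)"
      unfolding Rq_def by (simp add: le_divide_eq)
    then show ?thesis using F0 unfolding F_def by simp
  next
    case False
    then show ?thesis using F0 zero_on_V[of V "ht t"] unfolding F_def by auto
  qed
  define A where "A w = p * phi p (h x - h w)" for w
  define Dterm where "Dterm u v = (if E u v then (if u = x then A v else if v = x then A u else 0) else 0)" for u v
  have dterm: "DERIV (\<lambda>t. if E u v then \<bar>ht t u - ht t v\<bar> powr p else 0) 0 :> Dterm u v" for u v
  proof (cases "E u v")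
    case False
    then show ?thesis unfolding Dterm_def by simp
  next
    case True
    then have uv: "u \<noteq> v" using irr by auto
    consider "u = x" | "v = x" | "u \<noteq> x \<and> v \<noteq> x" by blast
    then show ?thesis
    proof cases
      case 1
      have eqf: "(\<lambda>t. if E u v then \<bar>ht t u - ht t v\<bar> powr p else 0) = (\<lambda>t. \<bar>(h x - h v) + t\<bar> powr p)"
        using True 1 uv unfolding ht_def by (auto simp: algebra_simps)
      have "DERIV (\<lambda>t. \<bar>(h x - h v) + t\<bar> powr p) 0 :> p * phi p ((h x - h v) + 0) * 1"
        by (rule DERIV_chain2[OF deriv_abs_powr[OF p]]) (auto intro!: derivative_eq_intros)
      then show ?thesis unfolding eqf Dterm_def A_def using True 1 by simp
    next
      case 2
      have eqf: "(\<lambda>t. if E u v then \<bar>ht t u - ht t v\<bar> powr p else 0) = (\<lambda>t. \<bar>(h u - h x) + (- t)\<bar> powr p)"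
        using True 2 uv unfolding ht_def by (auto simp: algebra_simps)
      have "DERIV (\<lambda>t. \<bar>(h u - h x) + (- t)\<bar> powr p) 0 :> p * phi p ((h u - h x) + - 0) * (-1)"
        by (rule DERIV_chain2[OF deriv_abs_powr[OF p]]) (auto intro!: derivative_eq_intros)
      moreover have "phi p (h u - h x) = - phi p (h x - h u)"
        using phi_minus[of p "h x - h u"] by simp
      ultimately show ?thesis unfolding eqf Dterm_def A_def using True 2 uv by simp
    next
      case 3
      have eqf: "(\<lambda>t. if E u v then \<bar>ht t u - ht t v\<bar> powr p else 0) = (\<lambda>t. \<bar>h u - h v\<bar> powr p)"
        using True 3 unfolding ht_def by auto
      show ?thesis unfolding eqf Dterm_def using 3 by simp
    qed
  qed
  have nterm: "DERIV (\<lambda>t. \<bar>ht t y\<bar> powr p) 0 :> (if y = x then p * phi p (h x) else 0)" for y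
  proof (cases "y = x")
    case True
    have eqf: "(\<lambda>t. \<bar>ht t y\<bar> powr p) = (\<lambda>t. \<bar>h x + t\<bar> powr p)" using True unfolding ht_def by auto
    have "DERIV (\<lambda>t. \<bar>h x + t\<bar> powr p) 0 :> p * phi p (h x + 0) * 1"
      by (rule DERIV_chain2[OF deriv_abs_powr[OF p]]) (auto intro!: derivative_eq_intros)
    then show ?thesis unfolding eqf using True by simp
  next
    case False
    have eqf: "(\<lambda>t. \<bar>ht t y\<bar> powr p) = (\<lambda>t. \<bar>h y\<bar> powr p)" using False unfolding ht_def by auto
    show ?thesis unfolding eqf using False by simp
  qed
  have dE: "DERIV (\<lambda>t. p_energy V E p (ht t)) 0 :> (\<Sum>u\<in>V. \<Sum>v\<in>V. Dterm u v) / 2"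
    unfolding p_energy_def
    by (intro DERIV_cdivide DERIV_sum dterm)
  have dN: "DERIV (\<lambda>t. p_norm_pow V p (ht t)) 0 :> (\<Sum>y\<in>V. if y = x then p * phi p (h x) else 0)"
    unfolding p_norm_pow_def
    by (intro DERIV_sum nterm)
  have dN': "(\<Sum>y\<in>V. if y = x then p * phi p (h x) else 0) = p * phi p (h x)"
    using xV finV by simp
  have dF: "DERIV F 0 :> (\<Sum>u\<in>V. \<Sum>v\<in>V. Dterm u v) / 2 - lam * (p * phi p (h x))"
    unfolding F_def using dE dN dN' by (auto intro!: DERIV_diff DERIV_cmult)
  have D0: "(\<Sum>u\<in>V. \<Sum>v\<in>V. Dterm u v) / 2 - lam * (p * phi p (h x)) = 0"
    by (rule DERIV_local_min[OF dF, of 1]) (use Fge in auto)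
  have split: "Dterm u v = (if u = x then (if E x v then A v else 0) else 0)
      + (if v = x then (if E x u then A u else 0) else 0)" for u v
    unfolding Dterm_def using irr sym by auto
  have "(\<Sum>u\<in>V. \<Sum>v\<in>V. Dterm u v) = (\<Sum>u\<in>V. \<Sum>v\<in>V. (if u = x then (if E x v then A v else 0) else 0))
       + (\<Sum>u\<in>V. \<Sum>v\<in>V. (if v = x then (if E x u then A u else 0) else 0))"
    unfolding split by (simp add: sum.distrib)
  also have "\<dots> = (\<Sum>v\<in>V. (if E x v then A v else 0)) + (\<Sum>u\<in>V. (if E x u then A u else 0))"
  proof -
    have a1: "(\<Sum>u\<in>V. \<Sum>v\<in>V. (if u = x then (if E x v then A v else 0) else 0))
        = (\<Sum>u\<in>V. if u = x then (\<Sum>v\<in>V. (if E x v then A v else 0)) else 0)"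
      by (rule sum.cong[OF refl]) simp
    have a2: "(\<Sum>u\<in>V. \<Sum>v\<in>V. (if v = x then (if E x u then A u else 0) else 0))
        = (\<Sum>u\<in>V. (if E x u then A u else 0))"
      by (rule sum.cong[OF refl]) (use xV finV in simp)
    show ?thesis unfolding a1 a2 using xV finV by simp
  qed
  also have "\<dots> = 2 * (\<Sum>v\<in>{y\<in>V. E x y}. A v)"
    using sum.inter_filter[OF finV, of A "\<lambda>v. E x v"] by simp
  finally have "(\<Sum>u\<in>V. \<Sum>v\<in>V. Dterm u v) = 2 * (\<Sum>v\<in>{y\<in>V. E x y}. A v)" .
  then have "(\<Sum>v\<in>{y\<in>V. E x y}. A v) = lam * (p * phi p (h x))" using D0 by simp
  then have "p * (\<Sum>v\<in>{y\<in>V. E x y}. phi p (h x - h v)) = p * (lam * phi p (h x))"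
    unfolding A_def by (simp add: sum_distrib_left[symmetric])
  then show ?thesis unfolding lam_def using p by simp
qed

lemma Pairs_alt: "Pairs n A = {e\<in>{1..n}\<times>{1..n}. fst e < snd e \<and> A (fst e) (snd e)}"
  unfolding Pairs_def by auto

lemma double_pairs:
  fixes F :: "nat \<Rightarrow> nat \<Rightarrow> real"
  assumes sym: "\<And>i j. A i j \<Longrightarrow> A j i" and irr: "\<And>i. \<not> A i i"
    and Fsym: "\<And>i j. F i j = F j i"
  shows "(\<Sum>i\<in>{1..n}. \<Sum>j\<in>{1..n}. if A i j then F i j else 0)
         = 2 * (\<Sum>e\<in>Pairs n A. F (fst e) (snd e))"
proof -
  define X where "X = (\<Sum>i\<in>{1..n}. \<Sum>j\<in>{1..n}. if A i j \<and> i < j then F i j else 0)"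
  define Y where "Y = (\<Sum>i\<in>{1..n}. \<Sum>j\<in>{1..n}. if A i j \<and> j < i then F i j else 0)"
  have spl: "(if A i j then F i j else 0) = (if A i j \<and> i < j then F i j else 0) + (if A i j \<and> j < i then F i j else 0)"
    for i j using irr[of i] by (cases "i < j"; cases "j < i") auto
  have "(\<Sum>i\<in>{1..n}. \<Sum>j\<in>{1..n}. if A i j then F i j else 0) = X + Y"
    unfolding X_def Y_def spl by (simp add: sum.distrib)
  moreover have "Y = (\<Sum>j\<in>{1..n}. \<Sum>i\<in>{1..n}. if A i j \<and> j < i then F i j else 0)"
    unfolding Y_def by (rule sum.swap)
  moreover have "\<dots> = X" unfolding X_def
    by (intro sum.cong refl) (use sym Fsym in auto)
  moreover have "X = (\<Sum>e\<in>Pairs n A. F (fst e) (snd e))"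
  proof -
    have "X = (\<Sum>e\<in>{1..n}\<times>{1..n}. if A (fst e) (snd e) \<and> fst e < snd e then F (fst e) (snd e) else 0)"
      unfolding X_def sum.cartesian_product by (simp add: case_prod_beta)
    also have "\<dots> = (\<Sum>e\<in>Pairs n A. F (fst e) (snd e))"
      unfolding Pairs_alt by (subst sum.inter_filter) (auto intro!: sum.cong)
    finally show ?thesis .
  qed
  ultimately show ?thesis by simp
qed

lemma energy_reindex:
  assumes "bij_betw \<sigma> {1..n} V"
  shows "p_energy V E p f = (\<Sum>i\<in>{1..n}. \<Sum>j\<in>{1..n}.
            if E (\<sigma> i) (\<sigma> j) then \<bar>f (\<sigma> i) - f (\<sigma> j)\<bar> powr p else 0) / 2"
proof -
  have "(\<Sum>x\<in>V. \<Sum>y\<in>V. if E x y then \<bar>f x - f y\<bar> powr p else 0)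
      = (\<Sum>i\<in>{1..n}. \<Sum>y\<in>V. if E (\<sigma> i) y then \<bar>f (\<sigma> i) - f y\<bar> powr p else 0)"
    using sum.reindex_bij_betw[OF assms, of "\<lambda>x. \<Sum>y\<in>V. if E x y then \<bar>f x - f y\<bar> powr p else 0"] by simp
  also have "\<dots> = (\<Sum>i\<in>{1..n}. \<Sum>j\<in>{1..n}. if E (\<sigma> i) (\<sigma> j) then \<bar>f (\<sigma> i) - f (\<sigma> j)\<bar> powr p else 0)"
  proof (intro sum.cong refl)
    fix i
    show "(\<Sum>y\<in>V. if E (\<sigma> i) y then \<bar>f (\<sigma> i) - f y\<bar> powr p else 0) =
      (\<Sum>j\<in>{1..n}. if E (\<sigma> i) (\<sigma> j) then \<bar>f (\<sigma> i) - f (\<sigma> j)\<bar> powr p else 0)"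
      using sum.reindex_bij_betw[OF assms, of "\<lambda>y. if E (\<sigma> i) y then \<bar>f (\<sigma> i) - f y\<bar> powr p else 0"]
      by simp
  qed
  finally show ?thesis unfolding p_energy_def by simp
qed

lemma norm_reindex:
  assumes "bij_betw \<sigma> {1..n} V"
  shows "p_norm_pow V p f = p_norm_pow {1..n} p (f \<circ> \<sigma>)"
  unfolding p_norm_pow_def using sum.reindex_bij_betw[OF assms, of "\<lambda>x. \<bar>f x\<bar> powr p"] by simp

lemma energy_to_EGn:
  assumes bij: "bij_betw \<sigma> {1..n} V"
    and sym: "\<And>x y. E x y \<Longrightarrow> E y x" and irr: "\<And>x. \<not> E x x"
    and mono: "\<And>i j. 1 \<le> i \<Longrightarrow> i \<le> j \<Longrightarrow> j \<le> n \<Longrightarrow> f (\<sigma> j) \<le> f (\<sigma> i)"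
  shows "p_energy V E p f = EGn n (\<lambda>i j. E (\<sigma> i) (\<sigma> j)) p (f \<circ> \<sigma>)"
proof -
  have "p_energy V E p f = 2 * (\<Sum>e\<in>Pairs n (\<lambda>i j. E (\<sigma> i) (\<sigma> j)).
          \<bar>f (\<sigma> (fst e)) - f (\<sigma> (snd e))\<bar> powr p) / 2"
    unfolding energy_reindex[OF bij]
    by (subst double_pairs[where F = "\<lambda>i j. \<bar>f (\<sigma> i) - f (\<sigma> j)\<bar> powr p"])
       (auto intro: sym simp: irr abs_minus_commute)
  also have "\<dots> = EGn n (\<lambda>i j. E (\<sigma> i) (\<sigma> j)) p (f \<circ> \<sigma>)"
    unfolding EGn_def
  proof (simp, intro sum.cong refl)
    fix e assume "e \<in> Pairs n (\<lambda>i j. E (\<sigma> i) (\<sigma> j))"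
    then have "f (\<sigma> (snd e)) \<le> f (\<sigma> (fst e))" using mono unfolding Pairs_def by auto
    then show "\<bar>f (\<sigma> (fst e)) - f (\<sigma> (snd e))\<bar> powr p = (f (\<sigma> (fst e)) - f (\<sigma> (snd e))) powr p"
      by simp
  qed
  finally show ?thesis .
qed

abbreviation "Tad n \<equiv> tadpole_adj n 3"

lemma tad_simple: "simple_graph {1..n} (Tad n)"
  unfolding simple_graph_def tadpole_adj_def by auto

lemma tad_nbrs_card:
  assumes n: "n \<ge> 4" and k: "1 \<le> k" "k < n"
  shows "card {y\<in>{1..n}. Tad n k y} \<ge> 2"
proof -
  have fin: "finite {y\<in>{1..n}. Tad n k y}" by simp
  show ?thesis
  proof (cases "k = 1")
    case True
    have "2 \<in> {y\<in>{1..n}. Tad n k y}" "3 \<in> {y\<in>{1..n}. Tad n k y}"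
      using True n unfolding tadpole_adj_def by auto
    then show ?thesis using card_ge2I[OF fin, of 2 3] by simp
  next
    case False
    have "k - 1 \<in> {y\<in>{1..n}. Tad n k y}" "Suc k \<in> {y\<in>{1..n}. Tad n k y}"
      using False k n unfolding tadpole_adj_def by auto
    then show ?thesis using card_ge2I[OF fin, of "k - 1" "Suc k"] False k by auto
  qed
qed

lemma tad_boundary: "n \<ge> 4 \<Longrightarrow> boundary {1..n} (Tad n) \<subseteq> {n}"
proof
  fix x assume n: "n \<ge> 4" and x: "x \<in> boundary {1..n} (Tad n)"
  then have x1: "x \<in> {1..n}" "degree {1..n} (Tad n) x = 1" unfolding boundary_def by auto
  show "x \<in> {n}"
  proof (rule ccontr)
    assume "x \<notin> {n}"
    then have "x < n" using x1 by auto
    then have "card {y\<in>{1..n}. Tad n x y} \<ge> 2" using tad_nbrs_card[OF n] x1 by auto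
    then show False using x1 unfolding degree_def by simp
  qed
qed

lemma tad_EGn:
  assumes n: "n \<ge> 4"
  shows "EGn n (Tad n) p a = ETn n p a"
proof -
  have P: "Pairs n (Tad n) = insert (1,3) ((\<lambda>k. (k, Suc k)) ` {1..<n})"
  proof
    show "Pairs n (Tad n) \<subseteq> insert (1,3) ((\<lambda>k. (k, Suc k)) ` {1..<n})"
    proof
      fix e assume "e \<in> Pairs n (Tad n)"
      then obtain i j where e: "e = (i,j)" "1 \<le> i" "i < j" "j \<le> n" "Tad n i j"
        unfolding Pairs_def by (cases e) auto
      then have "j = Suc i \<or> (i = 1 \<and> j = 3)" unfolding tadpole_adj_def by auto
      then show "e \<in> insert (1,3) ((\<lambda>k. (k, Suc k)) ` {1..<n})" using e by auto
    qed
  next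
    show "insert (1,3) ((\<lambda>k. (k, Suc k)) ` {1..<n}) \<subseteq> Pairs n (Tad n)"
      using n unfolding Pairs_def tadpole_adj_def by auto
  qed
  have nin: "(1::nat,3::nat) \<notin> (\<lambda>k. (k, Suc k)) ` {1..<n}" by auto
  have inj: "inj_on (\<lambda>k::nat. (k, Suc k)) {1..<n}" by (auto simp: inj_on_def)
  have "EGn n (Tad n) p a = (a 1 - a 3) powr p + (\<Sum>k\<in>{1..<n}. (a k - a (Suc k)) powr p)"
    unfolding EGn_def P using nin inj by (simp add: sum.reindex)
  also have "(\<Sum>k\<in>{1..<n}. (a k - a (Suc k)) powr p)
      = (a 1 - a 2) powr p + (a 2 - a 3) powr p + (\<Sum>k=3..<n. (a k - a (Suc k)) powr p)"
  proof -
    have "{1..<n} = {1,2} \<union> {3..<n}" using n by auto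
    then show ?thesis by (simp add: sum.union_disjoint numeral_eq_Suc)
  qed
  finally show ?thesis unfolding ETn_def by simp
qed

lemma tad_energy:
  assumes n: "n \<ge> 4" and mono: "\<And>i j. 1 \<le> i \<Longrightarrow> i \<le> j \<Longrightarrow> j \<le> n \<Longrightarrow> a j \<le> a i"
  shows "p_energy {1..n} (Tad n) p a = ETn n p a"
proof -
  have "p_energy {1..n} (Tad n) p a = EGn n (\<lambda>i j. Tad n (id i) (id j)) p (a \<circ> id)"
    by (rule energy_to_EGn[OF bij_betw_id]) (use mono in \<open>auto simp: tadpole_adj_def\<close>)
  then show ?thesis using tad_EGn[OF n] by simp
qed

lemma phi_nonpos: "t \<le> 0 \<Longrightarrow> phi p t \<le> 0"
  unfolding phi_def by (simp add: mult_nonpos_nonneg)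

lemma phi_neg: "t < 0 \<Longrightarrow> phi p t < 0"
  unfolding phi_def by simp

lemma phi_pos: "t > 0 \<Longrightarrow> phi p t > 0"
  unfolding phi_def by simp

lemma ETn_pos:
  assumes n: "n \<ge> 4" and mono: "\<And>i j. 1 \<le> i \<Longrightarrow> i \<le> j \<Longrightarrow> j \<le> n \<Longrightarrow> a j \<le> a i"
    and an: "a n = 0" and a1: "a 1 > 0"
  shows "ETn n p a > 0"
proof -
  have "a 1 - a n = (\<Sum>k\<in>{1..<n}. a k - a (Suc k))" using telescope[of 1 n a] n by simp
  then have "(\<Sum>k\<in>{1..<n}. a k - a (Suc k)) > 0" using an a1 by simp
  then obtain k where k: "k \<in> {1..<n}" "a k - a (Suc k) > 0"
    by (metis (no_types, lifting) sum_nonpos linorder_not_le)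
  have nn: "\<And>i. 0 \<le> (a i - a (Suc i)) powr p" by simp
  have t3: "(\<Sum>k=3..<n. (a k - a (Suc k)) powr p) \<ge> 0" by (intro sum_nonneg) simp
  consider "k = 1" | "k = 2" | "k \<ge> 3" using k by force
  then show ?thesis
  proof cases
    case 1
    then have "(a 1 - a 2) powr p > 0" using k by (simp add: numeral_eq_Suc)
    moreover have "(a 2 - a 3) powr p \<ge> 0" "(a 1 - a 3) powr p \<ge> 0" by simp_all
    ultimately show ?thesis unfolding ETn_def using t3 by linarith
  next
    case 2
    then have "(a 2 - a 3) powr p > 0" using k by (simp add: numeral_eq_Suc)
    moreover have "(a 1 - a 2) powr p \<ge> 0" "(a 1 - a 3) powr p \<ge> 0" by simp_all
    ultimately show ?thesis unfolding ETn_def using t3 by linarith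
  next
    case 3
    have "(a k - a (Suc k)) powr p \<le> (\<Sum>k=3..<n. (a k - a (Suc k)) powr p)"
      using 3 k by (intro member_le_sum) auto
    moreover have "(a k - a (Suc k)) powr p > 0" using k by simp
    moreover have "(a 1 - a 2) powr p \<ge> 0" "(a 2 - a 3) powr p \<ge> 0" "(a 1 - a 3) powr p \<ge> 0" by simp_all
    ultimately show ?thesis unfolding ETn_def by linarith
  qed
qed

lemma tad_strict:
  assumes p: "p > 1" and n: "n \<ge> 4"
    and mono: "\<And>i j. 1 \<le> i \<Longrightarrow> i \<le> j \<Longrightarrow> j \<le> n \<Longrightarrow> a j \<le> a i"
    and an: "a n = 0" and a1: "a 1 > 0"
    and amin: "\<And>g. adm {1..n} (Tad n) g \<Longrightarrow> Rq {1..n} (Tad n) p a \<le> Rq {1..n} (Tad n) p g"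
  shows "2 \<le> k \<Longrightarrow> k < n \<Longrightarrow> a (Suc k) < a k"
proof (induction k rule: less_induct)
  case (less k)
  have aadm: "adm {1..n} (Tad n) a"
  proof -
    have "1 \<in> {1..n}" "a 1 \<noteq> 0" using n a1 by auto
    then show ?thesis unfolding adm_def using tad_boundary[OF n] an by blast
  qed
  define lam where "lam = Rq {1..n} (Tad n) p a"
  have lampos: "lam > 0"
  proof -
    have "p_energy {1..n} (Tad n) p a > 0" using tad_energy[OF n mono] ETn_pos[OF n mono an a1] by simp
    moreover have "p_norm_pow {1..n} p a > 0" using adm_norm_pos[OF _ aadm] by simp
    ultimately show ?thesis unfolding lam_def Rq_def by simp
  qed
  have k: "2 \<le> k" "k < n" using less.prems by auto
  show ?case
  proof (rule ccontr)
    assume "\<not> a (Suc k) < a k"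
    then have eqk: "a (Suc k) = a k" using mono[of k "Suc k"] k by auto
    define N where "N = {y\<in>{1..n}. Tad n k y}"
    have kB: "k \<notin> boundary {1..n} (Tad n)" using tad_boundary[OF n] k by auto
    have EL: "(\<Sum>y\<in>N. phi p (a k - a y)) = lam * phi p (a k)"
      unfolding N_def lam_def
      by (rule EL[OF p tad_simple _ kB aadm amin]) (use k in auto)
    have Nle: "phi p (a k - a y) \<le> 0" if "y \<in> N" for y
    proof -
      have y: "1 \<le> y" "y \<le> Suc k" using that k unfolding N_def tadpole_adj_def by auto
      have "a y \<ge> a k"
      proof (cases "y = Suc k")
        case True then show ?thesis using eqk by simp
      next
        case False then show ?thesis using mono[of y k] y k by auto
      qed
      then show ?thesis by (intro phi_nonpos) simp
    qed
    have km1: "k - 1 \<in> N" using k unfolding N_def tadpole_adj_def by auto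
    have finN: "finite N" unfolding N_def by simp
    have LHS: "(\<Sum>y\<in>N. phi p (a k - a y)) \<le> phi p (a k - a (k - 1))"
    proof -
      have "(\<Sum>y\<in>N. phi p (a k - a y)) = phi p (a k - a (k - 1)) + (\<Sum>y\<in>N - {k - 1}. phi p (a k - a y))"
        using finN km1 by (simp add: sum.remove)
      moreover have "(\<Sum>y\<in>N - {k - 1}. phi p (a k - a y)) \<le> 0" using Nle by (intro sum_nonpos) auto
      ultimately show ?thesis by simp
    qed
    have ak0: "a k \<ge> 0" using mono[of k n] an k by auto
    show False
    proof (cases "a k > 0")
      case True
      have "lam * phi p (a k) > 0" using lampos phi_pos[OF True] by simp
      moreover have "phi p (a k - a (k - 1)) \<le> 0" using Nle km1 by blast
      ultimately show False using EL LHS by simp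
    next
      case False
      then have ak: "a k = 0" using ak0 by simp
      have "a (k - 1) > a k"
      proof (cases "k = 2")
        case True then show ?thesis using a1 ak by simp
      next
        case False
        then have "a (Suc (k - 1)) < a (k - 1)" using less.IH[of "k - 1"] k by auto
        then show ?thesis using k by simp
      qed
      then have "phi p (a k - a (k - 1)) < 0" by (intro phi_neg) simp
      moreover have "lam * phi p (a k) = 0" using ak unfolding phi_def by simp
      ultimately show False using EL LHS by linarith
    qed
  qed
qed

lemma exit_edge:
  assumes "E\<^sup>*\<^sup>* x y" "x \<in> S" "y \<notin> S"
  shows "\<exists>u v. u \<in> S \<and> v \<notin> S \<and> E u v"
  using assms by (induction rule: rtranclp_induct) auto

lemma two_nbrs:
  assumes G: "simple_graph V E" and C: "connected_graph V E" and card: "card V \<ge> 2"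
    and x: "x \<in> V" "x \<notin> boundary V E"
  shows "\<exists>y1 y2. y1 \<in> V \<and> y2 \<in> V \<and> y1 \<noteq> y2 \<and> E x y1 \<and> E x y2"
proof -
  have finV: "finite V" using G unfolding simple_graph_def by auto
  obtain z where z: "z \<in> V" "z \<noteq> x"
  proof -
    have "V - {x} \<noteq> {}"
    proof
      assume "V - {x} = {}"
      then have "V \<subseteq> {x}" by auto
      then have "card V \<le> 1" using card_mono[of "{x}" V] by simp
      then show False using card by simp
    qed
    then show ?thesis using that by auto
  qed
  have "E\<^sup>*\<^sup>* x z" using C x z unfolding connected_graph_def by auto
  then obtain u v where "u \<in> {x}" "v \<notin> {x}" "E u v" using exit_edge[of E x z "{x}"] z by auto
  then have v: "E x v" "v \<noteq> x" "v \<in> V" using G unfolding simple_graph_def by auto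
  define N where "N = {y\<in>V. E x y}"
  have finN: "finite N" unfolding N_def using finV by simp
  have vN: "v \<in> N" unfolding N_def using v by simp
  have "card N \<noteq> 1" using x unfolding boundary_def degree_def N_def by auto
  have "N - {v} \<noteq> {}"
  proof
    assume "N - {v} = {}"
    then have "N = {v}" using vN by auto
    then show False using \<open>card N \<noteq> 1\<close> by simp
  qed
  then obtain w where "w \<in> N" "w \<noteq> v" by auto
  then show ?thesis using vN unfolding N_def by blast
qed

lemma sort_exists:
  fixes h :: "'a \<Rightarrow> real"
  shows "finite V \<Longrightarrow> card V = n \<Longrightarrow>
    \<exists>\<sigma>. bij_betw \<sigma> {1..n} V \<and> (\<forall>i j. 1 \<le> i \<longrightarrow> i \<le> j \<longrightarrow> j \<le> n \<longrightarrow> h (\<sigma> j) \<le> h (\<sigma> i))"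
proof (induction n arbitrary: V)
  case 0
  then have "V = {}" by simp
  then show ?case by (auto simp: bij_betw_def)
next
  case (Suc n)
  then have "V \<noteq> {}" by auto
  define m0 where "m0 = Min (h ` V)"
  have "m0 \<in> h ` V" unfolding m0_def using Suc.prems \<open>V \<noteq> {}\<close> by (intro Min_in) auto
  then obtain m where m: "m \<in> V" "h m = m0" by auto
  have mmin: "h m \<le> h x" if "x \<in> V" for x using m that Suc.prems unfolding m0_def by simp
  have "card (V - {m}) = n" using Suc.prems m by simp
  then obtain \<sigma>' where s': "bij_betw \<sigma>' {1..n} (V - {m})"
    "\<forall>i j. 1 \<le> i \<longrightarrow> i \<le> j \<longrightarrow> j \<le> n \<longrightarrow> h (\<sigma>' j) \<le> h (\<sigma>' i)"
    using Suc.IH[of "V - {m}"] Suc.prems by auto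
  define \<sigma> where "\<sigma> = \<sigma>'(Suc n := m)"
  have img: "\<sigma> ` {1..Suc n} = V"
  proof -
    have e1: "{1..Suc n} = insert (Suc n) {1..n}" by auto
    have e2: "\<sigma> ` {1..n} = \<sigma>' ` {1..n}" unfolding \<sigma>_def by (intro image_cong) auto
    have "\<sigma> ` {1..Suc n} = insert m (\<sigma>' ` {1..n})" unfolding e1 image_insert e2 by (simp add: \<sigma>_def)
    also have "\<dots> = insert m (V - {m})" using s'(1) unfolding bij_betw_def by simp
    finally show ?thesis using m by auto
  qed
  have injs: "inj_on \<sigma>' {1..n}" using s'(1) unfolding bij_betw_def by simp
  have inS: "\<sigma>' k \<in> V - {m}" if "k \<in> {1..n}" for k using s'(1) that unfolding bij_betw_def by auto
  have inj: "inj_on \<sigma> {1..Suc n}"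
  proof (rule inj_onI)
    fix i j assume ij: "i \<in> {1..Suc n}" "j \<in> {1..Suc n}" "\<sigma> i = \<sigma> j"
    show "i = j"
    proof (cases "i = Suc n")
      case True
      show ?thesis
      proof (rule ccontr)
        assume "i \<noteq> j"
        then have "j \<in> {1..n}" "j \<noteq> Suc n" using ij True by auto
        then have "\<sigma> j \<in> V - {m}" using inS unfolding \<sigma>_def by simp
        moreover have "\<sigma> i = m" using True unfolding \<sigma>_def by simp
        ultimately show False using ij by simp
      qed
    next
      case False
      then have i: "i \<in> {1..n}" using ij by auto
      show ?thesis
      proof (cases "j = Suc n")
        case True
        have "\<sigma> i \<in> V - {m}" using inS[OF i] False unfolding \<sigma>_def by simp
        moreover have "\<sigma> j = m" using True unfolding \<sigma>_def by simp
        ultimately show ?thesis using ij by simp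
      next
        case False2: False
        then have j: "j \<in> {1..n}" using ij by auto
        have "\<sigma>' i = \<sigma>' j" using ij False False2 unfolding \<sigma>_def by simp
        then show ?thesis using injs i j unfolding inj_on_def by blast
      qed
    qed
  qed
  have mono: "h (\<sigma> j) \<le> h (\<sigma> i)" if "1 \<le> i" "i \<le> j" "j \<le> Suc n" for i j
  proof (cases "j = Suc n")
    case True
    have "\<sigma> i \<in> V" using img that by auto
    then show ?thesis using True mmin unfolding \<sigma>_def by auto
  next
    case False
    then show ?thesis using s'(2) that unfolding \<sigma>_def by auto
  qed
  show ?case using img inj mono unfolding bij_betw_def by blast
qed

lemma bij_pre:
  assumes "bij_betw \<sigma> {1..n} V" "x \<in> V"
  obtains i where "i \<in> {1..n}" "x = \<sigma> i"
  using assms unfolding bij_betw_def by auto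

lemma graph_sort_setup:
  fixes V :: "'a set" and E :: "'a \<Rightarrow> 'a \<Rightarrow> bool" and h :: "'a \<Rightarrow> real"
  assumes p: "p > 1" and G: "simple_graph V E" and C: "connected_graph V E"
    and cardV: "card V = n" and n: "n \<ge> 4" and B: "boundary V E \<noteq> {}"
    and hadm: "adm V E h" and hnn: "\<And>x. h x \<ge> 0"
  obtains \<sigma> where "bij_betw \<sigma> {1..n} V"
    "\<And>i j. 1 \<le> i \<Longrightarrow> i \<le> j \<Longrightarrow> j \<le> n \<Longrightarrow> (h \<circ> \<sigma>) j \<le> (h \<circ> \<sigma>) i"
    "(h \<circ> \<sigma>) n = 0" "(h \<circ> \<sigma>) 1 > 0"
    "\<And>k. 1 \<le> k \<Longrightarrow> k < n \<Longrightarrow> \<exists>i j. 1 \<le> i \<and> i \<le> k \<and> k < j \<and> j \<le> n \<and> E (\<sigma> i) (\<sigma> j)"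
    "\<exists>j1 j2. 2 \<le> j1 \<and> j1 \<le> n \<and> 2 \<le> j2 \<and> j2 \<le> n \<and> j1 \<noteq> j2 \<and> E (\<sigma> 1) (\<sigma> j1) \<and> E (\<sigma> 1) (\<sigma> j2)"
    "(h \<circ> \<sigma>) 2 = 0 \<or> (\<exists>m. 3 \<le> m \<and> m \<le> n \<and> E (\<sigma> 2) (\<sigma> m))"
    "p_energy V E p h = EGn n (\<lambda>i j. E (\<sigma> i) (\<sigma> j)) p (h \<circ> \<sigma>)"
    "p_norm_pow V p h = p_norm_pow {1..n} p (h \<circ> \<sigma>)"
proof -
  have finV: "finite V" and sym: "\<And>u v. E u v \<Longrightarrow> E v u" and irr: "\<And>u. \<not> E u u"
    and EV: "\<And>u v. E u v \<Longrightarrow> u \<in> V \<and> v \<in> V"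
    using G unfolding simple_graph_def by auto
  obtain \<sigma> where bij: "bij_betw \<sigma> {1..n} V"
    and mono0: "\<forall>i j. 1 \<le> i \<longrightarrow> i \<le> j \<longrightarrow> j \<le> n \<longrightarrow> h (\<sigma> j) \<le> h (\<sigma> i)"
    using sort_exists[OF finV cardV, of h] by blast
  define a where "a = h \<circ> \<sigma>"
  have mono: "a j \<le> a i" if "1 \<le> i" "i \<le> j" "j \<le> n" for i j
    using mono0 that unfolding a_def by auto
  have sV: "\<sigma> i \<in> V" if "i \<in> {1..n}" for i using bij that unfolding bij_betw_def by auto
  have sinj: "\<sigma> i = \<sigma> j \<Longrightarrow> i \<in> {1..n} \<Longrightarrow> j \<in> {1..n} \<Longrightarrow> i = j" for i j
    using bij unfolding bij_betw_def inj_on_def by blast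
  have hB: "h x = 0" if "x \<in> boundary V E" for x using hadm that unfolding adm_def by auto
  have an: "a n = 0"
  proof -
    obtain b where b: "b \<in> boundary V E" using B by auto
    then have "b \<in> V" unfolding boundary_def by auto
    then obtain k where k: "k \<in> {1..n}" "b = \<sigma> k" using bij_pre[OF bij] by metis
    have "a n \<le> a k" using mono[of k n] k by auto
    moreover have "a k = 0" using hB[OF b] k unfolding a_def by simp
    moreover have "a n \<ge> 0" unfolding a_def using hnn by simp
    ultimately show ?thesis by simp
  qed
  have a1: "a 1 > 0"
  proof -
    obtain x where x: "x \<in> V" "h x \<noteq> 0" using hadm unfolding adm_def by auto
    then obtain k where k: "k \<in> {1..n}" "x = \<sigma> k" using bij_pre[OF bij] by metis
    have "a k > 0" using x k hnn[of x] unfolding a_def by simp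
    moreover have "a k \<le> a 1" using mono[of 1 k] k by auto
    ultimately show ?thesis by simp
  qed
  have cut: "\<exists>i j. 1 \<le> i \<and> i \<le> k \<and> k < j \<and> j \<le> n \<and> E (\<sigma> i) (\<sigma> j)" if k: "1 \<le> k" "k < n" for k
  proof -
    define S where "S = \<sigma> ` {1..k}"
    have "\<sigma> 1 \<in> S" unfolding S_def using k by auto
    moreover have "\<sigma> n \<notin> S"
    proof
      assume "\<sigma> n \<in> S"
      then obtain i where "i \<in> {1..k}" "\<sigma> n = \<sigma> i" unfolding S_def by auto
      then show False using sinj[of n i] k by auto
    qed
    moreover have "E\<^sup>*\<^sup>* (\<sigma> 1) (\<sigma> n)" using C sV[of 1] sV[of n] k unfolding connected_graph_def by auto
    ultimately obtain u v where uv: "u \<in> S" "v \<notin> S" "E u v" using exit_edge by metis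
    obtain i where i: "i \<in> {1..k}" "u = \<sigma> i" using uv unfolding S_def by auto
    have "v \<in> V" using EV[OF uv(3)] by simp
    then obtain j where j: "j \<in> {1..n}" "v = \<sigma> j" using bij_pre[OF bij] by metis
    have "j > k" using j uv(2) unfolding S_def by (metis atLeastAtMost_iff image_eqI not_le)
    then show ?thesis using i j uv by auto
  qed
  have cardV2: "card V \<ge> 2" using cardV n by simp
  have deg1: "\<exists>j1 j2. 2 \<le> j1 \<and> j1 \<le> n \<and> 2 \<le> j2 \<and> j2 \<le> n \<and> j1 \<noteq> j2 \<and> E (\<sigma> 1) (\<sigma> j1) \<and> E (\<sigma> 1) (\<sigma> j2)"
  proof -
    have "\<sigma> 1 \<notin> boundary V E" using hB a1 unfolding a_def by force
    then obtain y1 y2 where y: "y1 \<in> V" "y2 \<in> V" "y1 \<noteq> y2" "E (\<sigma> 1) y1" "E (\<sigma> 1) y2"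
      using two_nbrs[OF G C cardV2 sV[of 1]] n by auto
    obtain j1 where j1: "j1 \<in> {1..n}" "y1 = \<sigma> j1" using bij_pre[OF bij y(1)] by metis
    obtain j2 where j2: "j2 \<in> {1..n}" "y2 = \<sigma> j2" using bij_pre[OF bij y(2)] by metis
    have "j1 \<noteq> 1" "j2 \<noteq> 1" using y j1 j2 irr by auto
    then show ?thesis using j1 j2 y by (intro exI[of _ j1] exI[of _ j2]) auto
  qed
  have deg2: "a 2 = 0 \<or> (\<exists>m. 3 \<le> m \<and> m \<le> n \<and> E (\<sigma> 2) (\<sigma> m))"
  proof (cases "a 2 = 0")
    case False
    have "\<sigma> 2 \<notin> boundary V E" using hB False unfolding a_def by force
    then obtain y1 y2 where y: "y1 \<in> V" "y2 \<in> V" "y1 \<noteq> y2" "E (\<sigma> 2) y1" "E (\<sigma> 2) y2"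
      using two_nbrs[OF G C cardV2 sV[of 2]] n by auto
    obtain y where yy: "y \<in> V" "y \<noteq> \<sigma> 1" "E (\<sigma> 2) y" using y by metis
    obtain m where m: "m \<in> {1..n}" "y = \<sigma> m" using bij_pre[OF bij yy(1)] by metis
    have "m \<noteq> 1" "m \<noteq> 2" using yy m irr by auto
    then show ?thesis using m yy by auto
  qed simp
  have en: "p_energy V E p h = EGn n (\<lambda>i j. E (\<sigma> i) (\<sigma> j)) p (h \<circ> \<sigma>)"
    by (rule energy_to_EGn[OF bij]) (use sym irr mono0 in auto)
  have nm: "p_norm_pow V p h = p_norm_pow {1..n} p (h \<circ> \<sigma>)" by (rule norm_reindex[OF bij])
  show ?thesis
    by (rule that[OF bij _ _ _ cut deg1 _ en nm]) (use mono an a1 deg2 a_def in auto)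
qed

lemma abs_energy_le:
  assumes "p \<ge> 0"
  shows "p_energy V E p (\<lambda>x. \<bar>f x\<bar>) \<le> p_energy V E p f"
  unfolding p_energy_def
proof (intro divide_right_mono sum_mono)
  fix x y
  have "\<bar>\<bar>f x\<bar> - \<bar>f y\<bar>\<bar> \<le> \<bar>f x - f y\<bar>" by (rule abs_triangle_ineq3)
  then show "(if E x y then \<bar>\<bar>f x\<bar> - \<bar>f y\<bar>\<bar> powr p else 0) \<le> (if E x y then \<bar>f x - f y\<bar> powr p else 0)"
    using assms by (auto intro: powr_mono2)
qed simp

lemma abs_norm: "p_norm_pow V p (\<lambda>x. \<bar>f x\<bar>) = p_norm_pow V p f"
  unfolding p_norm_pow_def by simp

lemma adm_abs: "adm V E f \<Longrightarrow> adm V E (\<lambda>x. \<bar>f x\<bar>)"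
  unfolding adm_def by auto

lemma Rq_abs:
  assumes "finite V" "adm V E f" "p \<ge> 0"
  shows "Rq V E p (\<lambda>x. \<bar>f x\<bar>) \<le> Rq V E p f"
  unfolding Rq_def abs_norm using abs_energy_le[OF assms(3), of V E f] adm_norm_pos[OF assms(1,2), of p]
  by (simp add: divide_right_mono)

lemma tad_adm: "n \<ge> 4 \<Longrightarrow> a n = 0 \<Longrightarrow> a 1 \<noteq> 0 \<Longrightarrow> adm {1..n} (Tad n) a"
  unfolding adm_def using tad_boundary[of n] by (auto intro!: bexI[of _ 1])

lemma exists_interior:
  assumes G: "simple_graph V E" and C: "connected_graph V E" and card: "card V \<ge> 3"
  shows "\<exists>x\<in>V. x \<notin> boundary V E"
proof (rule ccontr)
  assume "\<not> (\<exists>x\<in>V. x \<notin> boundary V E)"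
  then have allB: "\<And>x. x \<in> V \<Longrightarrow> x \<in> boundary V E" by auto
  have finV: "finite V" and sym: "\<And>u v. E u v \<Longrightarrow> E v u"
    and EV: "\<And>u v. E u v \<Longrightarrow> u \<in> V \<and> v \<in> V"
    using G unfolding simple_graph_def by auto
  have one: "\<exists>u. {y\<in>V. E x y} = {u}" if "x \<in> V" for x
  proof -
    have "card {y\<in>V. E x y} = 1" using allB[OF that] unfolding boundary_def degree_def by simp
    then show ?thesis by (simp add: card_1_singleton_iff)
  qed
  have "V \<noteq> {}" using card by auto
  then obtain b where b: "b \<in> V" by auto
  obtain u where u: "{y\<in>V. E b y} = {u}" using one[OF b] by auto
  then have ub: "E b u" "u \<in> V" by auto
  obtain w where w: "{y\<in>V. E u y} = {w}" using one[OF ub(2)] by auto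
  have "b \<in> {y\<in>V. E u y}" using sym[OF ub(1)] b by simp
  then have wb: "w = b" using w by simp
  have "\<exists>z\<in>V. z \<notin> {b, u}"
  proof (rule ccontr)
    assume "\<not> (\<exists>z\<in>V. z \<notin> {b, u})"
    then have "V \<subseteq> {b, u}" by auto
    then have "card V \<le> card {b, u}" by (rule card_mono[rotated]) simp
    also have "\<dots> \<le> 2" by (cases "b = u") simp_all
    finally show False using card by simp
  qed
  then obtain z where z: "z \<in> V" "z \<notin> {b, u}" by auto
  have "E\<^sup>*\<^sup>* b z" using C b z unfolding connected_graph_def by auto
  then obtain x y where xy: "x \<in> {b,u}" "y \<notin> {b,u}" "E x y"
    using exit_edge[of E b z "{b,u}"] z by auto
  have yV: "y \<in> V" using EV[OF xy(3)] by simp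
  show False
  proof (cases "x = b")
    case True
    then have "y \<in> {y\<in>V. E b y}" using yV xy by simp
    then show False using u xy by simp
  next
    case False
    then have "x = u" using xy by simp
    then have "y \<in> {y\<in>V. E u y}" using yV xy by simp
    then show False using w wb xy by simp
  qed
qed

lemma lambda_ge_tad:
  fixes V :: "'a set" and E :: "'a \<Rightarrow> 'a \<Rightarrow> bool"
  assumes p: "p > 1" and G: "simple_graph V E" and C: "connected_graph V E"
    and cardV: "card V = n" and n: "n \<ge> 4" and B: "boundary V E \<noteq> {}"
    and fadm: "adm V E f"
  shows "lambda1p {1..n} (Tad n) p \<le> Rq V E p f"
proof -
  have finV: "finite V" using G unfolding simple_graph_def by auto
  define h where "h = (\<lambda>x. \<bar>f x\<bar>)"
  have hadm: "adm V E h" unfolding h_def by (rule adm_abs[OF fadm])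
  have hnn: "\<And>x. h x \<ge> 0" unfolding h_def by simp
  have hle: "Rq V E p h \<le> Rq V E p f" unfolding h_def using Rq_abs[OF finV fadm] p by simp
  have sym: "\<And>u v. E u v \<Longrightarrow> E v u" and irr: "\<And>u. \<not> E u u"
    using G unfolding simple_graph_def by auto
  obtain \<sigma> where s: "bij_betw \<sigma> {1..n} V"
    "\<And>i j. 1 \<le> i \<Longrightarrow> i \<le> j \<Longrightarrow> j \<le> n \<Longrightarrow> (h \<circ> \<sigma>) j \<le> (h \<circ> \<sigma>) i"
    "(h \<circ> \<sigma>) n = 0" "(h \<circ> \<sigma>) 1 > 0"
    "\<And>k. 1 \<le> k \<Longrightarrow> k < n \<Longrightarrow> \<exists>i j. 1 \<le> i \<and> i \<le> k \<and> k < j \<and> j \<le> n \<and> E (\<sigma> i) (\<sigma> j)"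
    "\<exists>j1 j2. 2 \<le> j1 \<and> j1 \<le> n \<and> 2 \<le> j2 \<and> j2 \<le> n \<and> j1 \<noteq> j2 \<and> E (\<sigma> 1) (\<sigma> j1) \<and> E (\<sigma> 1) (\<sigma> j2)"
    "(h \<circ> \<sigma>) 2 = 0 \<or> (\<exists>m. 3 \<le> m \<and> m \<le> n \<and> E (\<sigma> 2) (\<sigma> m))"
    "p_energy V E p h = EGn n (\<lambda>i j. E (\<sigma> i) (\<sigma> j)) p (h \<circ> \<sigma>)"
    "p_norm_pow V p h = p_norm_pow {1..n} p (h \<circ> \<sigma>)"
    using graph_sort_setup[OF p G C cardV n B hadm hnn] by blast
  define a where "a = h \<circ> \<sigma>"
  have mono_a: "\<And>i j. 1 \<le> i \<Longrightarrow> i \<le> j \<Longrightarrow> j \<le> n \<Longrightarrow> a j \<le> a i"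
    using s(2) unfolding a_def by blast
  have ET: "ETn n p a \<le> EGn n (\<lambda>i j. E (\<sigma> i) (\<sigma> j)) p a"
    unfolding a_def by (rule core(1)[OF p n s(2,3,5,6,7)])
  have aadm: "adm {1..n} (Tad n) a" using tad_adm[OF n] s(3,4) unfolding a_def by simp
  have Npos: "p_norm_pow {1..n} p a > 0" using adm_norm_pos[OF _ aadm] by simp
  have "Rq {1..n} (Tad n) p a = ETn n p a / p_norm_pow {1..n} p a"
    unfolding Rq_def using tad_energy[OF n mono_a] by simp
  also have "\<dots> \<le> EGn n (\<lambda>i j. E (\<sigma> i) (\<sigma> j)) p a / p_norm_pow {1..n} p a"
    using ET Npos by (simp add: divide_right_mono)
  also have "\<dots> = Rq V E p h" unfolding Rq_def s(8) s(9) a_def by simp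
  finally have "Rq {1..n} (Tad n) p a \<le> Rq V E p h" .
  then show ?thesis using lambda_le[OF aadm, of p] hle by simp
qed

lemma subseq_conv:
  fixes F :: "nat \<Rightarrow> 'a \<Rightarrow> real"
  assumes "finite S" "\<And>m x. x \<in> S \<Longrightarrow> \<bar>F m x\<bar> \<le> 1"
  shows "\<exists>r. strict_mono r \<and> (\<forall>x\<in>S. convergent (\<lambda>m. F (r m) x))"
  using assms
proof (induction S rule: finite_induct)
  case empty
  show ?case by (rule exI[of _ id]) (simp add: strict_mono_def)
next
  case (insert x S)
  obtain r where r: "strict_mono r" "\<forall>y\<in>S. convergent (\<lambda>m. F (r m) y)" using insert by auto
  obtain f where f: "strict_mono f" "monoseq (\<lambda>n. F (r (f n)) x)"
    using seq_monosub[of "\<lambda>m. F (r m) x"] by auto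
  have "Bseq (\<lambda>n. F (r (f n)) x)" by (rule BseqI'[of _ 1]) (use insert.prems in auto)
  then have cx: "convergent (\<lambda>n. F (r (f n)) x)" using Bseq_monoseq_convergent f(2) by blast
  have cy: "convergent (\<lambda>n. F (r (f n)) y)" if "y \<in> S" for y
    using convergent_subseq_convergent[OF r(2)[rule_format, OF that] f(1)] by (simp add: o_def)
  show ?case
    by (rule exI[of _ "r \<circ> f"]) (use strict_mono_o[OF r(1) f(1)] cx cy in \<open>auto simp: o_def\<close>)
qed

lemma scale_energy: "p_energy V E p (\<lambda>x. c * f x) = \<bar>c\<bar> powr p * p_energy V E p f"
proof -
  have "\<bar>c * f x - c * f y\<bar> powr p = \<bar>c\<bar> powr p * \<bar>f x - f y\<bar> powr p" for x y
    by (simp add: right_diff_distrib[symmetric] abs_mult powr_mult)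
  then show ?thesis unfolding p_energy_def by (simp add: sum_distrib_left if_distrib cong: if_cong)
qed

lemma scale_norm: "p_norm_pow V p (\<lambda>x. c * f x) = \<bar>c\<bar> powr p * p_norm_pow V p f"
  unfolding p_norm_pow_def by (simp add: abs_mult powr_mult sum_distrib_left)

lemma normalize:
  assumes finV: "finite V" and fadm: "adm V E f" and p: "p > 0"
  shows "\<exists>g. adm V E g \<and> p_norm_pow V p g = 1 \<and> Rq V E p g = Rq V E p f"
proof -
  define N where "N = p_norm_pow V p f"
  have N: "N > 0" unfolding N_def using adm_norm_pos[OF finV fadm] .
  define c where "c = 1 / N powr (1 / p)"
  have c: "c > 0" unfolding c_def using N by simp
  have cp: "\<bar>c\<bar> powr p = 1 / N"
  proof -
    have "\<bar>c\<bar> powr p = 1 powr p / (N powr (1 / p)) powr p" using c unfolding c_def by (simp add: powr_divide)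
    also have "\<dots> = 1 / N" using N p by (simp add: powr_powr)
    finally show ?thesis .
  qed
  define g where "g = (\<lambda>x. c * f x)"
  have "adm V E g" using fadm c unfolding adm_def g_def by auto
  moreover have "p_norm_pow V p g = 1" unfolding g_def scale_norm cp N_def[symmetric] using N by simp
  moreover have "Rq V E p g = Rq V E p f" unfolding Rq_def g_def scale_norm scale_energy cp
    using N unfolding N_def by simp
  ultimately show ?thesis by blast
qed

lemma tendsto_abs_powr:
  fixes u :: "'b \<Rightarrow> real"
  assumes "(u \<longlongrightarrow> l) F" "p > 0"
  shows "((\<lambda>m. \<bar>u m\<bar> powr p) \<longlongrightarrow> \<bar>l\<bar> powr p) F"
  using tendsto_powr'[OF tendsto_rabs[OF assms(1)] tendsto_const[of p]] assms(2) by simp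

lemma attain:
  fixes V :: "'a set" and E :: "'a \<Rightarrow> 'a \<Rightarrow> bool"
  assumes finV: "finite V" and p: "p > 0" and ex: "adm V E f0"
  shows "\<exists>f. adm V E f \<and> Rq V E p f = lambda1p V E p"
proof -
  define lam where "lam = lambda1p V E p"
  have ne: "{Rq V E p f | f. adm V E f} \<noteq> {}" using ex by blast
  have "\<exists>g. adm V E g \<and> p_norm_pow V p g = 1 \<and> Rq V E p g < lam + 1 / Suc m" for m
  proof -
    have "Inf {Rq V E p f | f. adm V E f} < lam + 1 / Suc m"
      unfolding lam_def lambda1p_alt by simp
    then obtain f where f: "adm V E f" "Rq V E p f < lam + 1 / Suc m"
      using cInf_lessD[OF ne] by blast
    then show ?thesis using normalize[OF finV f(1) p] by auto
  qed
  then obtain F where F: "\<And>m. adm V E (F m)" "\<And>m. p_norm_pow V p (F m) = 1"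
    "\<And>m. Rq V E p (F m) < lam + 1 / Suc m"
    by metis
  have Fb: "\<bar>F m x\<bar> \<le> 1" if "x \<in> V" for m x
  proof (rule ccontr)
    assume "\<not> \<bar>F m x\<bar> \<le> 1"
    then have "1 < \<bar>F m x\<bar> powr p" using p by simp
    also have "\<dots> \<le> p_norm_pow V p (F m)" unfolding p_norm_pow_def
      using finV that by (intro member_le_sum) auto
    finally show False using F(2) by simp
  qed
  obtain r where r: "strict_mono r" "\<forall>x\<in>V. convergent (\<lambda>m. F (r m) x)"
    using subseq_conv[OF finV, of F] Fb by blast
  define g where "g x = (if x \<in> V then lim (\<lambda>m. F (r m) x) else 0)" for x
  have gl: "(\<lambda>m. F (r m) x) \<longlonglongrightarrow> g x" if "x \<in> V" for x
    using r(2) that unfolding g_def by (simp add: convergent_LIMSEQ_iff)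
  have Nl: "(\<lambda>m. p_norm_pow V p (F (r m))) \<longlonglongrightarrow> p_norm_pow V p g"
    unfolding p_norm_pow_def by (intro tendsto_sum tendsto_abs_powr gl p)
  have El: "(\<lambda>m. p_energy V E p (F (r m))) \<longlonglongrightarrow> p_energy V E p g"
    unfolding p_energy_def
  proof (intro tendsto_divide tendsto_const tendsto_sum)
    fix x y assume xy: "x \<in> V" "y \<in> V"
    show "(\<lambda>m. if E x y then \<bar>F (r m) x - F (r m) y\<bar> powr p else 0) \<longlonglongrightarrow>
          (if E x y then \<bar>g x - g y\<bar> powr p else 0)"
      using xy by (cases "E x y") (auto intro!: tendsto_abs_powr tendsto_diff gl p)
  qed simp
  have Nc: "(\<lambda>m. p_norm_pow V p (F (r m))) = (\<lambda>m. 1)" using F(2) by simp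
  have g1: "p_norm_pow V p g = 1" using LIMSEQ_unique[OF Nl[unfolded Nc] tendsto_const] by simp
  have gnz: "\<exists>x\<in>V. g x \<noteq> 0"
  proof (rule ccontr)
    assume "\<not> (\<exists>x\<in>V. g x \<noteq> 0)"
    then have "p_norm_pow V p g = 0" using zero_on_V(2)[of V g] by auto
    then show False using g1 by simp
  qed
  have gB: "g x = 0" if "x \<in> boundary V E" for x
  proof -
    have xV: "x \<in> V" using that unfolding boundary_def by auto
    have e0: "(\<lambda>m. F (r m) x) = (\<lambda>m. 0)" using F(1) that unfolding adm_def by auto
    show ?thesis using LIMSEQ_unique[OF gl[OF xV, unfolded e0] tendsto_const] by simp
  qed
  have gadm: "adm V E g" unfolding adm_def using gnz gB by auto
  have Rg: "Rq V E p g = p_energy V E p g" unfolding Rq_def g1 by simp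
  have ERq: "p_energy V E p (F m) = Rq V E p (F m)" for m unfolding Rq_def using F(2)[of m] by simp
  have le: "p_energy V E p g \<le> lam"
  proof (rule ccontr)
    assume "\<not> p_energy V E p g \<le> lam"
    then have "p_energy V E p g - lam > 0" by simp
    then obtain k where k: "inverse (real (Suc k)) < p_energy V E p g - lam"
      using reals_Archimedean by blast
    have "p_energy V E p g \<le> lam + 1 / Suc k"
    proof (rule LIMSEQ_le_const2[OF El], rule exI[of _ k], intro allI impI)
      fix m assume "k \<le> m"
      then have "k \<le> r m" using seq_suble[OF r(1), of m] by simp
      then have "1 / real (Suc (r m)) \<le> 1 / Suc k" by (intro divide_left_mono) auto
      then show "p_energy V E p (F (r m)) \<le> lam + 1 / Suc k"
        using F(3)[of "r m"] ERq[of "r m"] by simp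
    qed
    then show False using k by (simp add: inverse_eq_divide)
  qed
  have "lam \<le> Rq V E p g" unfolding lam_def by (rule lambda_le[OF gadm])
  then show ?thesis using le Rg gadm unfolding lam_def by (intro exI[of _ g]) simp
qed

lemma adj_equiv:
  fixes A :: "nat \<Rightarrow> nat \<Rightarrow> bool"
  assumes n: "n \<ge> 4" and sym: "\<And>i j. A i j \<Longrightarrow> A j i" and irr: "\<And>i. \<not> A i i"
    and consec0: "\<forall>i j. 1 \<le> i \<and> i < j \<and> j \<le> n \<and> A i j \<longrightarrow> j = Suc i \<or> (i = 1 \<and> j = 3)"
    and A13: "A 1 3"
    and cut: "\<And>k. 1 \<le> k \<Longrightarrow> k < n \<Longrightarrow> \<exists>i j. 1 \<le> i \<and> i \<le> k \<and> k < j \<and> j \<le> n \<and> A i j"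
    and deg1: "\<exists>j1 j2. 2 \<le> j1 \<and> j1 \<le> n \<and> 2 \<le> j2 \<and> j2 \<le> n \<and> j1 \<noteq> j2 \<and> A 1 j1 \<and> A 1 j2"
    and deg2: "\<exists>m. 3 \<le> m \<and> m \<le> n \<and> A 2 m"
  shows "\<forall>i\<in>{1..n}. \<forall>j\<in>{1..n}. A i j \<longleftrightarrow> Tad n i j"
proof -
  have consec: "j = Suc i \<or> (i = 1 \<and> j = 3)" if "1 \<le> i" "i < j" "j \<le> n" "A i j" for i j
    using consec0 that by blast
  have cons: "A k (Suc k)" if k: "1 \<le> k" "k < n" for k
  proof -
    consider "k = 1" | "k = 2" | "k \<ge> 3" using k by linarith
    then show ?thesis
    proof cases
      case 1
      obtain j1 j2 where j: "2 \<le> j1" "j1 \<le> n" "2 \<le> j2" "j2 \<le> n" "j1 \<noteq> j2" "A 1 j1" "A 1 j2"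
        using deg1 by blast
      have "j1 = 2 \<or> j1 = 3" using consec[of 1 j1] j by auto
      moreover have "j2 = 2 \<or> j2 = 3" using consec[of 1 j2] j by auto
      ultimately have "A 1 2" using j by auto
      then show ?thesis using 1 by (simp add: numeral_eq_Suc)
    next
      case 2
      obtain m where m: "3 \<le> m" "m \<le> n" "A 2 m" using deg2 by blast
      have "m = 3" using consec[of 2 m] m by auto
      then show ?thesis using 2 m by (simp add: numeral_eq_Suc)
    next
      case 3
      obtain i j where ij: "1 \<le> i" "i \<le> k" "k < j" "j \<le> n" "A i j" using cut[OF k] by blast
      have "j = Suc i \<or> (i = 1 \<and> j = 3)" using consec[of i j] ij by auto
      then have "i = k" "j = Suc k" using ij 3 by auto
      then show ?thesis using ij by simp
    qed
  qed
  show ?thesis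
  proof (intro ballI iffI)
    fix i j assume ij: "i \<in> {1..n}" "j \<in> {1..n}" "A i j"
    have "i \<noteq> j" using irr ij by auto
    then consider "i < j" | "j < i" by linarith
    then show "Tad n i j"
    proof cases
      case 1
      then have "j = Suc i \<or> (i = 1 \<and> j = 3)" using consec[of i j] ij by auto
      then show ?thesis using ij unfolding tadpole_adj_def by auto
    next
      case 2
      then have "i = Suc j \<or> (j = 1 \<and> i = 3)" using consec[of j i] ij sym[of i j] by auto
      then show ?thesis using ij unfolding tadpole_adj_def by auto
    qed
  next
    fix i j assume ij: "i \<in> {1..n}" "j \<in> {1..n}" "Tad n i j"
    then consider "j = i + 1" | "i = j + 1" | "i = 1 \<and> j = 3" | "i = 3 \<and> j = 1"
      unfolding tadpole_adj_def by auto
    then show "A i j"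
    proof cases
      case 1 then show ?thesis using cons[of i] ij by auto
    next
      case 2 then show ?thesis using cons[of j] ij sym by auto
    next
      case 3 then show ?thesis using A13 by simp
    next
      case 4 then show ?thesis using A13 sym by simp
    qed
  qed
qed

lemma iso_le:
  fixes V :: "'a set" and E :: "'a \<Rightarrow> 'a \<Rightarrow> bool" and W :: "'b set" and F :: "'b \<Rightarrow> 'b \<Rightarrow> bool"
  assumes iso: "graph_iso V E W F" and ex: "adm W F g0"
  shows "lambda1p V E p \<le> lambda1p W F p"
proof -
  obtain h where h: "bij_betw h V W" "\<And>x y. x \<in> V \<Longrightarrow> y \<in> V \<Longrightarrow> E x y \<longleftrightarrow> F (h x) (h y)"
    using iso unfolding graph_iso_def by blast
  have hV: "h x \<in> W" if "x \<in> V" for x using h(1) that unfolding bij_betw_def by auto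
  have inj: "inj_on h V" using h(1) unfolding bij_betw_def by simp
  have surj: "\<exists>y\<in>V. z = h y" if "z \<in> W" for z using h(1) that unfolding bij_betw_def by auto
  have deg: "degree V E x = degree W F (h x)" if x: "x \<in> V" for x
  proof -
    have "{z\<in>W. F (h x) z} = h ` {y\<in>V. E x y}"
    proof
      show "{z\<in>W. F (h x) z} \<subseteq> h ` {y\<in>V. E x y}"
      proof
        fix z assume "z \<in> {z\<in>W. F (h x) z}"
        then obtain y where "y \<in> V" "z = h y" "F (h x) z" using surj by blast
        then show "z \<in> h ` {y\<in>V. E x y}" using h(2)[OF x] by auto
      qed
      show "h ` {y\<in>V. E x y} \<subseteq> {z\<in>W. F (h x) z}" using h(2)[OF x] hV by auto
    qed
    moreover have "inj_on h {y\<in>V. E x y}" using inj by (rule inj_on_subset) auto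
    ultimately show ?thesis unfolding degree_def by (simp add: card_image)
  qed
  have bd: "h x \<in> boundary W F" if "x \<in> boundary V E" for x
    using that deg hV unfolding boundary_def by auto
  have en: "p_energy V E p (g \<circ> h) = p_energy W F p g" for g
  proof -
    have "(\<Sum>x\<in>V. \<Sum>y\<in>V. if E x y then \<bar>(g \<circ> h) x - (g \<circ> h) y\<bar> powr p else 0)
        = (\<Sum>x\<in>V. \<Sum>y\<in>V. if F (h x) (h y) then \<bar>g (h x) - g (h y)\<bar> powr p else 0)"
      using h(2) by (intro sum.cong refl) auto
    also have "\<dots> = (\<Sum>x\<in>V. \<Sum>z\<in>W. if F (h x) z then \<bar>g (h x) - g z\<bar> powr p else 0)"
    proof (intro sum.cong refl)
      fix x
      show "(\<Sum>y\<in>V. if F (h x) (h y) then \<bar>g (h x) - g (h y)\<bar> powr p else 0) =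
            (\<Sum>z\<in>W. if F (h x) z then \<bar>g (h x) - g z\<bar> powr p else 0)"
        using sum.reindex_bij_betw[OF h(1), of "\<lambda>z. if F (h x) z then \<bar>g (h x) - g z\<bar> powr p else 0"] by simp
    qed
    also have "\<dots> = (\<Sum>w\<in>W. \<Sum>z\<in>W. if F w z then \<bar>g w - g z\<bar> powr p else 0)"
      using sum.reindex_bij_betw[OF h(1), of "\<lambda>w. \<Sum>z\<in>W. if F w z then \<bar>g w - g z\<bar> powr p else 0"] by simp
    finally show ?thesis unfolding p_energy_def by simp
  qed
  have nm: "p_norm_pow V p (g \<circ> h) = p_norm_pow W p g" for g
    unfolding p_norm_pow_def using sum.reindex_bij_betw[OF h(1), of "\<lambda>w. \<bar>g w\<bar> powr p"] by simp
  show ?thesis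
  proof (rule lambda_ge[OF ex])
    fix g assume g: "adm W F g"
    have "adm V E (g \<circ> h)"
      unfolding adm_def
    proof
      show "\<forall>x\<in>boundary V E. (g \<circ> h) x = 0" using g bd unfolding adm_def by auto
      obtain w where w: "w \<in> W" "g w \<noteq> 0" using g unfolding adm_def by auto
      then obtain y where "y \<in> V" "w = h y" using surj by blast
      then show "\<exists>x\<in>V. (g \<circ> h) x \<noteq> 0" using w by auto
    qed
    then have "lambda1p V E p \<le> Rq V E p (g \<circ> h)" by (rule lambda_le)
    also have "\<dots> = Rq W F p g" unfolding Rq_def en nm ..
    finally show "lambda1p V E p \<le> Rq W F p g" .
  qed
qed

lemma eq_iso:
  fixes V :: "'a set" and E :: "'a \<Rightarrow> 'a \<Rightarrow> bool"
  assumes p: "p > 1" and G: "simple_graph V E" and C: "connected_graph V E"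
    and cardV: "card V = n" and n: "n \<ge> 4" and B: "boundary V E \<noteq> {}"
    and f0: "adm V E f0"
    and eq: "lambda1p V E p = lambda1p {1..n} (Tad n) p"
  shows "graph_iso V E {1..n} (Tad n)"
proof -
  have finV: "finite V" and sym: "\<And>u v. E u v \<Longrightarrow> E v u" and irr: "\<And>u. \<not> E u u"
    using G unfolding simple_graph_def by auto
  obtain f where f: "adm V E f" "Rq V E p f = lambda1p V E p"
    using attain[OF finV _ f0, of p] p by auto
  define h where "h = (\<lambda>x. \<bar>f x\<bar>)"
  have hadm: "adm V E h" unfolding h_def by (rule adm_abs[OF f(1)])
  have hnn: "\<And>x. h x \<ge> 0" unfolding h_def by simp
  have hRq: "Rq V E p h = lambda1p V E p"
  proof -
    have "Rq V E p h \<le> Rq V E p f" unfolding h_def using Rq_abs[OF finV f(1)] p by simp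
    moreover have "lambda1p V E p \<le> Rq V E p h" by (rule lambda_le[OF hadm])
    ultimately show ?thesis using f(2) by simp
  qed
  obtain \<sigma> where s: "bij_betw \<sigma> {1..n} V"
    "\<And>i j. 1 \<le> i \<Longrightarrow> i \<le> j \<Longrightarrow> j \<le> n \<Longrightarrow> (h \<circ> \<sigma>) j \<le> (h \<circ> \<sigma>) i"
    "(h \<circ> \<sigma>) n = 0" "(h \<circ> \<sigma>) 1 > 0"
    "\<And>k. 1 \<le> k \<Longrightarrow> k < n \<Longrightarrow> \<exists>i j. 1 \<le> i \<and> i \<le> k \<and> k < j \<and> j \<le> n \<and> E (\<sigma> i) (\<sigma> j)"
    "\<exists>j1 j2. 2 \<le> j1 \<and> j1 \<le> n \<and> 2 \<le> j2 \<and> j2 \<le> n \<and> j1 \<noteq> j2 \<and> E (\<sigma> 1) (\<sigma> j1) \<and> E (\<sigma> 1) (\<sigma> j2)"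
    "(h \<circ> \<sigma>) 2 = 0 \<or> (\<exists>m. 3 \<le> m \<and> m \<le> n \<and> E (\<sigma> 2) (\<sigma> m))"
    "p_energy V E p h = EGn n (\<lambda>i j. E (\<sigma> i) (\<sigma> j)) p (h \<circ> \<sigma>)"
    "p_norm_pow V p h = p_norm_pow {1..n} p (h \<circ> \<sigma>)"
    using graph_sort_setup[OF p G C cardV n B hadm hnn] by blast
  define a where "a = h \<circ> \<sigma>"
  define A where "A = (\<lambda>i j. E (\<sigma> i) (\<sigma> j))"
  have mono_a: "\<And>i j. 1 \<le> i \<Longrightarrow> i \<le> j \<Longrightarrow> j \<le> n \<Longrightarrow> a j \<le> a i"
    using s(2) unfolding a_def by blast
  have an: "a n = 0" and a1: "a 1 > 0" using s(3,4) unfolding a_def by auto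
  have aadm: "adm {1..n} (Tad n) a" using tad_adm[OF n] an a1 by simp
  have Npos: "p_norm_pow {1..n} p a > 0" using adm_norm_pos[OF _ aadm] by simp
  have RT: "Rq {1..n} (Tad n) p a = ETn n p a / p_norm_pow {1..n} p a"
    unfolding Rq_def using tad_energy[OF n mono_a] by simp
  have RG: "Rq V E p h = EGn n A p a / p_norm_pow {1..n} p a"
    unfolding Rq_def s(8) s(9) a_def A_def by simp
  have ET: "ETn n p a \<le> EGn n A p a"
    unfolding a_def A_def by (rule core(1)[OF p n s(2,3,5,6,7)])
  have le1: "lambda1p {1..n} (Tad n) p \<le> Rq {1..n} (Tad n) p a" by (rule lambda_le[OF aadm])
  have le2: "Rq {1..n} (Tad n) p a \<le> Rq V E p h" unfolding RT RG using ET Npos by (simp add: divide_right_mono)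
  have RTeq: "Rq {1..n} (Tad n) p a = lambda1p {1..n} (Tad n) p" using le1 le2 hRq eq by simp
  have "ETn n p a / p_norm_pow {1..n} p a = EGn n A p a / p_norm_pow {1..n} p a"
    using le1 le2 hRq eq RT RG by linarith
  then have EE: "EGn n A p a = ETn n p a" using Npos by simp
  have amin: "\<And>g. adm {1..n} (Tad n) g \<Longrightarrow> Rq {1..n} (Tad n) p a \<le> Rq {1..n} (Tad n) p g"
    using RTeq lambda_le by metis
  have strict: "\<And>k. 2 \<le> k \<Longrightarrow> k < n \<Longrightarrow> a (Suc k) < a k"
    using tad_strict[OF p n mono_a an a1 amin] by blast
  have C2: "(\<forall>i j. 1 \<le> i \<and> i < j \<and> j \<le> n \<and> A i j \<longrightarrow> j = Suc i \<or> (i = 1 \<and> j = 3)) \<and> A 1 3"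
    unfolding A_def
    by (rule core(2)[OF p n s(2,3,5,6,7)]) (use strict EE in \<open>auto simp: a_def A_def o_def\<close>)
  have deg2: "\<exists>m. 3 \<le> m \<and> m \<le> n \<and> A 2 m"
  proof -
    have "a 3 \<ge> 0" using mono_a[of 3 n] an n by auto
    then have "a 2 \<noteq> 0" using strict[of 2] n by (simp add: numeral_eq_Suc)
    then show ?thesis using s(7) unfolding a_def A_def by auto
  qed
  have adj: "\<forall>i\<in>{1..n}. \<forall>j\<in>{1..n}. A i j \<longleftrightarrow> Tad n i j"
  proof (rule adj_equiv[OF n])
    show "\<And>i j. A i j \<Longrightarrow> A j i" unfolding A_def using sym by blast
    show "\<And>i. \<not> A i i" unfolding A_def using irr by blast
  qed (use C2 s(5,6) deg2 in \<open>auto simp: A_def\<close>)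
  define g where "g = inv_into {1..n} \<sigma>"
  have gb: "bij_betw g V {1..n}" unfolding g_def by (rule bij_betw_inv_into[OF s(1)])
  have sg: "\<sigma> (g x) = x" if "x \<in> V" for x
    unfolding g_def using s(1) that by (simp add: bij_betw_inv_into_right)
  have gV: "g x \<in> {1..n}" if "x \<in> V" for x using gb that unfolding bij_betw_def by auto
  show ?thesis unfolding graph_iso_def
  proof (intro exI[of _ g] conjI gb ballI)
    fix x y assume xy: "x \<in> V" "y \<in> V"
    have "E x y = A (g x) (g y)" unfolding A_def using sg xy by simp
    also have "\<dots> = Tad n (g x) (g y)" using adj gV xy by blast
    finally show "E x y = Tad n (g x) (g y)" .
  qed
qed

theorem theorem1p2:
  fixes V :: "'a set" and E :: "'a \<Rightarrow> 'a \<Rightarrow> bool" and p :: real and n :: nat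
  assumes "p > 1"
    and "simple_graph V E" and "connected_graph V E"
    and "card V = n" and "n \<ge> 4"
    and "boundary V E \<noteq> {}"
  shows "lambda1p V E p \<ge> lambda1p (tadpole_vertices n) (tadpole_adj n 3) p
    \<and> (lambda1p V E p = lambda1p (tadpole_vertices n) (tadpole_adj n 3) p
         \<longleftrightarrow> graph_iso V E (tadpole_vertices n) (tadpole_adj n 3))"
proof -
  note p = assms(1) and G = assms(2) and C = assms(3) and cardV = assms(4) and n = assms(5) and B = assms(6)
  obtain x0 where x0: "x0 \<in> V" "x0 \<notin> boundary V E"
    using exists_interior[OF G C] cardV n by auto
  define f0 where "f0 = (\<lambda>y. if y = x0 then (1::real) else 0)"
  have f0: "adm V E f0" unfolding adm_def f0_def using x0 by auto
  have ge: "lambda1p {1..n} (Tad n) p \<le> lambda1p V E p"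
    by (rule lambda_ge[OF f0]) (rule lambda_ge_tad[OF p G C cardV n B])
  define t0 where "t0 = (\<lambda>k::nat. if k = 1 then (1::real) else 0)"
  have t0: "adm {1..n} (Tad n) t0" using tad_adm[OF n, of t0] n unfolding t0_def by simp
  have iff: "lambda1p V E p = lambda1p {1..n} (Tad n) p \<longleftrightarrow> graph_iso V E {1..n} (Tad n)"
  proof
    assume "lambda1p V E p = lambda1p {1..n} (Tad n) p"
    then show "graph_iso V E {1..n} (Tad n)" by (rule eq_iso[OF p G C cardV n B f0])
  next
    assume "graph_iso V E {1..n} (Tad n)"
    then have "lambda1p V E p \<le> lambda1p {1..n} (Tad n) p" by (rule iso_le[OF _ t0])
    then show "lambda1p V E p = lambda1p {1..n} (Tad n) p" using ge by simp
  qed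
  show ?thesis unfolding tadpole_vertices_def using ge iff by simp
qed

end
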